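(* Let $L\in\mathbb N$ satisfy $\operatorname{rank}\mathcal O_L(\Sigma_s)=n$. Then for any input signal $u$ and any $x(0)$, the IOH $v$ and output $y$ of $\Sigma_s$ satisfy $v(t+1)=\Theta v(t)+\Pi u(t)$ and $y(t)=C\Gamma v(t)$ for all $t\ge L$. Further, $v(t)\in\mathscr P:=\mathrm{im}[\Theta^{L(m+r)-1}\Pi,\dots,\Theta\Pi,\Pi]$ for all $t\ge L$, and $\dim\mathscr P=Lm+n$.
   Context: System $\Sigma_s$: $x(t+1)=Ax(t)+Bu(t)$, $y(t)=Cx(t)$, $t\ge0$, $x\in\mathbb R^n,u\in\mathbb R^m,y\in\mathbb R^r$; standing assumptions: $(A,B,C)$ is a minimal realization and $A$ is Schur. $\mathcal R_L(\Sigma_s)=[A^{L-1}B,\dots,AB,B]$, $\mathcal O_L(\Sigma_s)=[C^\top,(CA)^\top,\dots,(CA^{L-1})^\top]^\top$, and $\mathcal H_L(\Sigma_s)$ is the $Lr\times Lm$ block lower-triangular Toeplitz matrix with $(i,j)$ block $H_{i-j}$ for $j\le i$, where $H_0=0$, $H_k=CA^{k-1}B$. The $L$-length input–output history (IOH) is $v(t)=[u(t-L)^\top,\dots,u(t-1)^\top,y(t-L)^\top,\dots,y(t-1)^\top]^\top\in\mathbb R^{L(m+r)}$, $t\ge L$. $\Gamma=[\mathcal R_L-A^L\mathcal O_L^\dagger\mathcal H_L,\ A^L\mathcal O_L^\dagger]$ ($\dagger$: Moore–Penrose inverse). $\Theta=\mathrm{diag}(S_m,S_r)+EC\Gamma$,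 where $S_k$ is the $Lk\times Lk$ block matrix with $I_k$ in blocks $(i,i+1)$, $i=1,\dots,L-1$, zeros elsewhere, and $E\in\mathbb R^{L(m+r)\times r}$ has $I_r$ in its last $r$ rows and zeros elsewhere. $\Pi\in\mathbb R^{L(m+r)\times m}$ has $I_m$ in rows $(L-1)m+1,\dots,Lm$ and zeros elsewhere. *)

theory Defs
  imports "Jordan_Normal_Form.DL_Rank" "Jordan_Normal_Form.Char_Poly"
begin

text \<open>All matrices are Jordan_Normal_Form matrices over the reals with explicit
  dimensions; block matrices are described entrywise with 0-based indices.\<close>

definition mat_rank :: "real mat \<Rightarrow> nat" where
  "mat_rank M = vec_space.rank (dim_row M) M"

definition mat_image :: "real mat \<Rightarrow> real vec set" where
  "mat_image M = {M *\<^sub>v w | w. w \<in> carrier_vec (dim_col M)}"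

definition schur_mat :: "real mat \<Rightarrow> bool" where
  "schur_mat A \<longleftrightarrow> (\<forall>ev. eigenvalue (map_mat complex_of_real A) ev \<longrightarrow> cmod ev < 1)"

definition pinv :: "real mat \<Rightarrow> real mat" where
  "pinv M = (THE X. X \<in> carrier_mat (dim_col M) (dim_row M) \<and>
     M * X * M = M \<and> X * M * X = X \<and>
     transpose_mat (M * X) = M * X \<and> transpose_mat (X * M) = X * M)"

definition hcat :: "real mat \<Rightarrow> real mat \<Rightarrow> real mat" where
  "hcat P Q = mat (dim_row P) (dim_col P + dim_col Q)
     (\<lambda>(i,j). if j < dim_col P then P $$ (i,j) else Q $$ (i, j - dim_col P))"

text \<open>R_L = [A^(L-1) B, ..., A B, B]  (n x Lm)\<close>
definition reach_mat :: "nat \<Rightarrow> real mat \<Rightarrow> real mat \<Rightarrow> real mat" where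
  "reach_mat L A B = mat (dim_row A) (L * dim_col B)
     (\<lambda>(i,k). ((A ^\<^sub>m (L - 1 - k div dim_col B)) * B) $$ (i, k mod dim_col B))"

text \<open>O_L = [C; CA; ...; CA^(L-1)]  (Lr x n)\<close>
definition obs_mat :: "nat \<Rightarrow> real mat \<Rightarrow> real mat \<Rightarrow> real mat" where
  "obs_mat L A C = mat (L * dim_row C) (dim_col A)
     (\<lambda>(i,k). (C * (A ^\<^sub>m (i div dim_row C))) $$ (i mod dim_row C, k))"

definition markov :: "real mat \<Rightarrow> real mat \<Rightarrow> real mat \<Rightarrow> nat \<Rightarrow> real mat" where
  "markov A B C k = (if k = 0 then 0\<^sub>m (dim_row C) (dim_col B)
                     else C * (A ^\<^sub>m (k - 1)) * B)"

text \<open>H_L: Lr x Lm block lower triangular Toeplitz matrix with (i,j) block H_(i-j)\<close>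
definition toeplitz_mat :: "nat \<Rightarrow> real mat \<Rightarrow> real mat \<Rightarrow> real mat \<Rightarrow> real mat" where
  "toeplitz_mat L A B C = mat (L * dim_row C) (L * dim_col B)
     (\<lambda>(i,j). if j div dim_col B \<le> i div dim_row C
              then markov A B C (i div dim_row C - j div dim_col B) $$ (i mod dim_row C, j mod dim_col B)
              else 0)"

definition Gamma_mat :: "nat \<Rightarrow> real mat \<Rightarrow> real mat \<Rightarrow> real mat \<Rightarrow> real mat" where
  "Gamma_mat L A B C = hcat
     (reach_mat L A B - (A ^\<^sub>m L) * pinv (obs_mat L A C) * toeplitz_mat L A B C)
     ((A ^\<^sub>m L) * pinv (obs_mat L A C))"

text \<open>S_k: Lk x Lk, identity I_k in blocks (i,i+1)\<close>
definition shift_mat :: "nat \<Rightarrow> nat \<Rightarrow> real mat" where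
  "shift_mat L k = mat (L * k) (L * k)
     (\<lambda>(i,j). if j div k = i div k + 1 \<and> j mod k = i mod k then 1 else 0)"

text \<open>E: L(m+r) x r, I_r in the last r rows\<close>
definition E_mat :: "nat \<Rightarrow> nat \<Rightarrow> nat \<Rightarrow> real mat" where
  "E_mat L m r = mat (L * (m + r)) r (\<lambda>(i,j). if i = L * (m + r) - r + j then 1 else 0)"

text \<open>Pi: L(m+r) x m, I_m in rows (L-1)m+1..Lm (1-based)\<close>
definition Pi_mat :: "nat \<Rightarrow> nat \<Rightarrow> nat \<Rightarrow> real mat" where
  "Pi_mat L m r = mat (L * (m + r)) m (\<lambda>(i,j). if i = (L - 1) * m + j then 1 else 0)"

definition Theta_mat :: "nat \<Rightarrow> real mat \<Rightarrow> real mat \<Rightarrow> real mat \<Rightarrow> real mat" where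
  "Theta_mat L A B C =
     four_block_mat (shift_mat L (dim_col B)) (0\<^sub>m (L * dim_col B) (L * dim_row C))
                    (0\<^sub>m (L * dim_row C) (L * dim_col B)) (shift_mat L (dim_row C))
     + E_mat L (dim_col B) (dim_row C) * C * Gamma_mat L A B C"

text \<open>[Theta^(N-1) Pi, ..., Theta Pi, Pi] with N = L(m+r)\<close>
definition P_mat :: "nat \<Rightarrow> real mat \<Rightarrow> real mat \<Rightarrow> real mat \<Rightarrow> real mat" where
  "P_mat L A B C =
    (let m = dim_col B; r = dim_row C; N = L * (m + r);
         Th = Theta_mat L A B C; Pm = Pi_mat L m r
     in mat N (N * m) (\<lambda>(i,k). ((Th ^\<^sub>m (N - 1 - k div m)) * Pm) $$ (i, k mod m)))"

fun state :: "real mat \<Rightarrow> real mat \<Rightarrow> real vec \<Rightarrow> (nat \<Rightarrow> real vec) \<Rightarrow> nat \<Rightarrow> real vec" where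
  "state A B x0 u 0 = x0"
| "state A B x0 u (Suc t) = A *\<^sub>v state A B x0 u t + B *\<^sub>v u t"

text \<open>L-length input-output history
  v(t) = [u(t-L); ...; u(t-1); y(t-L); ...; y(t-1)] (meaningful for t \<ge> L)\<close>
definition ioh :: "nat \<Rightarrow> nat \<Rightarrow> nat \<Rightarrow> (nat \<Rightarrow> real vec) \<Rightarrow> (nat \<Rightarrow> real vec) \<Rightarrow> nat \<Rightarrow> real vec" where
  "ioh L m r u y t = vec (L * (m + r))
     (\<lambda>i. if i < L * m then u (t - L + i div m) $ (i mod m)
          else y (t - L + (i - L * m) div r) $ ((i - L * m) mod r))"

end

theory Submission
  imports Defs
begin

lemma mv_entry:
  assumes "i < dim_row M" "dim_vec v = dim_col M"
  shows "(M *\<^sub>v v) $ i = (\<Sum>j<dim_col M. M $$ (i,j) * v $ j)"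
  using assms by (simp add: scalar_prod_def row_def atLeast0LessThan)

lemma mult_unit_vec_col:
  fixes M :: "real mat"
  assumes "M \<in> carrier_mat p q" "j < q"
  shows "M *\<^sub>v unit_vec q j = col M j"
proof (rule eq_vecI)
  fix i assume "i < dim_vec (col M j)"
  then have i: "i < p" using assms by simp
  have "(M *\<^sub>v unit_vec q j) $ i = (\<Sum>k<q. M $$ (i,k) * unit_vec q j $ k)"
    using assms i by (subst mv_entry) auto
  also have "\<dots> = (\<Sum>k<q. if k = j then M $$ (i,k) else 0)"
    by (rule sum.cong) (auto simp: unit_vec_def)
  also have "\<dots> = M $$ (i,j)" using assms by simp
  finally show "(M *\<^sub>v unit_vec q j) $ i = col M j $ i" using assms i by simp
qed (use assms in auto)

lemma mat_eq_by_vec: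
  fixes X Y :: "real mat"
  assumes "X \<in> carrier_mat p q" "Y \<in> carrier_mat p q"
    "\<And>z. z \<in> carrier_vec q \<Longrightarrow> X *\<^sub>v z = Y *\<^sub>v z"
  shows "X = Y"
proof (rule eq_matI)
  fix i j assume ij: "i < dim_row Y" "j < dim_col Y"
  have "X $$ (i,j) = col X j $ i" using ij assms by simp
  also have "\<dots> = (X *\<^sub>v unit_vec q j) $ i" using ij assms by (simp add: mult_unit_vec_col)
  also have "\<dots> = (Y *\<^sub>v unit_vec q j) $ i" using assms(3)[of "unit_vec q j"] by simp
  also have "\<dots> = Y $$ (i,j)" using ij assms by (simp add: mult_unit_vec_col)
  finally show "X $$ (i,j) = Y $$ (i,j)" .
qed (use assms in auto)

lemma (in vec_space) rank_lt_nondistinct: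
  assumes "A \<in> carrier_mat n nc" and "\<not> distinct (cols A)"
  shows "rank A < nc"
proof -
  obtain S where S: "maximal S (\<lambda>T. T \<subseteq> set (cols A) \<and> lin_indpt T)"
    using maximal_exists[of "(\<lambda>T. T \<subseteq> set (cols A) \<and> lin_indpt T)" "card (set (cols A))" "{}"]
    by (meson List.finite_set card_mono empty_iff empty_subsetI finite_lin_indpt2 rev_finite_subset)
  then have "card S \<le> card (set (cols A))" by (simp add: card_mono maximal_def)
  moreover have "card (set (cols A)) < nc"
    using assms card_distinct[of "cols A"] card_length[of "cols A"] by (metis cols_length carrier_matD(2) le_neq_implies_less)
  ultimately show ?thesis using rank_card_indpt[OF assms(1) S] by simp
qed

lemma rank_full_col_inj:
  fixes M :: "real mat"
  assumes M: "M \<in> carrier_mat p q" and rk: "vec_space.rank p M = q"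
    and z: "z \<in> carrier_vec q" and Mz: "M *\<^sub>v z = 0\<^sub>v p"
  shows "z = 0\<^sub>v q"
proof (rule ccontr)
  assume nz: "z \<noteq> 0\<^sub>v q"
  interpret vec_space "TYPE(real)" p .
  have d: "distinct (cols M)"
    using rank_lt_nondistinct[OF M] rk by fastforce
  have "lin_indpt (set (cols M))" using full_rank_lin_indpt[OF M rk d] .
  moreover have "lin_dep (set (cols M))" using lin_depI[OF M z nz Mz d] .
  ultimately show False by simp
qed

lemma rank_inj:
  fixes M :: "real mat"
  assumes M: "M \<in> carrier_mat p q"
    and inj: "\<And>z. z \<in> carrier_vec q \<Longrightarrow> M *\<^sub>v z = 0\<^sub>v p \<Longrightarrow> z = 0\<^sub>v q"
  shows "vec_space.rank p M = q"
proof -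
  interpret vec_space "TYPE(real)" p .
  have d: "distinct (cols M)"
  proof (rule ccontr)
    assume "\<not> distinct (cols M)"
    then obtain i j where ij: "i < q" "j < q" "i \<noteq> j" "cols M ! i = cols M ! j"
      using M by (metis cols_length carrier_matD(2) distinct_conv_nth)
    let ?z = "unit_vec q i - unit_vec q j :: real vec"
    have zc: "?z \<in> carrier_vec q" by simp
    have "?z $ i = 1" using ij by simp
    then have "?z \<noteq> 0\<^sub>v q"
    proof -
      assume h: "?z $ i = 1"
      show ?thesis
      proof
        assume "?z = 0\<^sub>v q"
        then have "?z $ i = (0\<^sub>v q :: real vec) $ i" by simp
        then show False using h ij by simp
      qed
    qed
    moreover have "M *\<^sub>v ?z = 0\<^sub>v p"
    proof -
      have "M *\<^sub>v ?z = M *\<^sub>v unit_vec q i - M *\<^sub>v unit_vec q j"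
        using M by (simp add: mult_minus_distrib_mat_vec)
      also have "\<dots> = col M i - col M j" using M ij by (simp add: mult_unit_vec_col)
      also have "\<dots> = 0\<^sub>v p" using ij M by (intro eq_vecI) auto
      finally show ?thesis .
    qed
    ultimately show False using inj[OF zc] by simp
  qed
  have "lin_indpt (set (cols M))"
  proof
    assume "lin_dep (set (cols M))"
    then obtain v where "v \<in> carrier_vec q" "v \<noteq> 0\<^sub>v q" "M *\<^sub>v v = 0\<^sub>v p"
      using lin_depE[OF M _ d] by blast
    then show False using inj by blast
  qed
  then show ?thesis using lin_indpt_full_rank[OF M d] by blast
qed

lemma rank_le_rows:
  fixes M :: "real mat"
  assumes M: "M \<in> carrier_mat p q"
  shows "vec_space.rank p M \<le> p"
proof -
  interpret vec_space "TYPE(real)" p .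
  obtain S where S: "maximal S (\<lambda>T. T \<subseteq> set (cols M) \<and> lin_indpt T)"
    using maximal_exists[of "(\<lambda>T. T \<subseteq> set (cols M) \<and> lin_indpt T)" "card (set (cols M))" "{}"]
    by (meson List.finite_set card_mono empty_iff empty_subsetI finite_lin_indpt2 rev_finite_subset)
  have "S \<subseteq> set (cols M)" using S unfolding maximal_def by auto
  then have sub: "S \<subseteq> carrier_vec p" using M cols_dim[of M] by auto
  have li: "lin_indpt S" using S unfolding maximal_def by auto
  have "card S \<le> dim" using li_le_dim(2)[OF fin_dim _ li] sub by simp
  then show ?thesis using rank_card_indpt[OF M S] dim_is_n by simp
qed

lemma rank_full_row_surj:
  fixes M :: "real mat"
  assumes M: "M \<in> carrier_mat p q" and rk: "vec_space.rank p M = p"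
    and y: "y \<in> carrier_vec p"
  shows "\<exists>z \<in> carrier_vec q. M *\<^sub>v z = y"
proof -
  interpret vec_space "TYPE(real)" p .
  obtain S where S: "maximal S (\<lambda>T. T \<subseteq> set (cols M) \<and> lin_indpt T)" and fS: "finite S"
    using maximal_exists[of "(\<lambda>T. T \<subseteq> set (cols M) \<and> lin_indpt T)" "card (set (cols M))" "{}"]
    by (meson List.finite_set card_mono empty_iff empty_subsetI finite_lin_indpt2 rev_finite_subset)
  have sub: "S \<subseteq> set (cols M)" using S unfolding maximal_def by auto
  have subc: "S \<subseteq> carrier_vec p" using sub M cols_dim[of M] by auto
  have li: "lin_indpt S" using S unfolding maximal_def by auto
  have "card S = p" using rank_card_indpt[OF M S] rk by simp
  then have "basis S" using dim_li_is_basis[OF fin_dim fS _ li] subc dim_is_n by simp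
  then have "span S = carrier_vec p" unfolding basis_def by simp
  then have "y \<in> span S" using y by simp
  moreover have "span S \<subseteq> span (set (cols M))" using sub by (rule span_is_monotone)
  ultimately have "y \<in> col_space M" unfolding col_space_def by auto
  then show ?thesis using col_space_eq[OF M] M by auto
qed

lemma gram_inj:
  fixes M :: "real mat"
  assumes M: "M \<in> carrier_mat p q"
    and inj: "\<And>z. z \<in> carrier_vec q \<Longrightarrow> M *\<^sub>v z = 0\<^sub>v p \<Longrightarrow> z = 0\<^sub>v q"
    and z: "z \<in> carrier_vec q" and Gz: "(transpose_mat M * M) *\<^sub>v z = 0\<^sub>v q"
  shows "z = 0\<^sub>v q"
proof -
  have "(transpose_mat M *\<^sub>v (M *\<^sub>v z)) \<bullet> z = (M *\<^sub>v z) \<bullet> (M *\<^sub>v z)"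
    using transpose_vec_mult_scalar[OF M z, of "M *\<^sub>v z"] M z by simp
  moreover have "transpose_mat M *\<^sub>v (M *\<^sub>v z) = 0\<^sub>v q"
    using Gz M z by (metis assoc_mult_mat_vec transpose_carrier_mat)
  ultimately have "(M *\<^sub>v z) \<bullet> (M *\<^sub>v z) = 0" using z by simp
  then have "(\<Sum>i\<in>{0..<p}. (M *\<^sub>v z) $ i * (M *\<^sub>v z) $ i) = 0"
    using M by (simp add: scalar_prod_def)
  then have "\<forall>i\<in>{0..<p}. (M *\<^sub>v z) $ i * (M *\<^sub>v z) $ i = 0"
    by (subst sum_nonneg_eq_0_iff[symmetric]) auto
  then have "M *\<^sub>v z = 0\<^sub>v p" using M by (intro eq_vecI) auto
  then show ?thesis using inj z by blast
qed

lemma pinv_left: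
  fixes M :: "real mat"
  assumes M: "M \<in> carrier_mat p q"
    and inj: "\<And>z. z \<in> carrier_vec q \<Longrightarrow> M *\<^sub>v z = 0\<^sub>v p \<Longrightarrow> z = 0\<^sub>v q"
  shows "pinv M \<in> carrier_mat q p" "\<And>x. x \<in> carrier_vec q \<Longrightarrow> pinv M *\<^sub>v (M *\<^sub>v x) = x"
proof -
  define Mt where "Mt = transpose_mat M"
  have Mt: "Mt \<in> carrier_mat q p" using M unfolding Mt_def by simp
  define G where "G = Mt * M"
  have G: "G \<in> carrier_mat q q" using M Mt unfolding G_def by simp
  have Gt: "transpose_mat G = G" unfolding G_def Mt_def using M
    by (simp add: transpose_mult[of "transpose_mat M" q p M q])
  have Ginj: "\<And>z. z \<in> carrier_vec q \<Longrightarrow> G *\<^sub>v z = 0\<^sub>v q \<Longrightarrow> z = 0\<^sub>v q"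
    using gram_inj[OF M inj] unfolding G_def Mt_def by blast
  have dG: "det G \<noteq> 0"
    using det_0_iff_vec_prod_zero_field[OF G] Ginj by blast
  define Gi where "Gi = (1 / det G) \<cdot>\<^sub>m adj_mat G"
  have Gi: "Gi \<in> carrier_mat q q" unfolding Gi_def using adj_mat(1)[OF G] by simp
  have GiG: "Gi * G = 1\<^sub>m q"
  proof -
    have "Gi * G = (1 / det G) \<cdot>\<^sub>m (adj_mat G * G)"
      unfolding Gi_def using mult_smult_assoc_mat[OF adj_mat(1)[OF G] G] .
    also have "\<dots> = (1 / det G) \<cdot>\<^sub>m (det G \<cdot>\<^sub>m 1\<^sub>m q)" using adj_mat(3)[OF G] by simp
    also have "\<dots> = 1\<^sub>m q" by (rule eq_matI) (use dG in auto)
    finally show ?thesis .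
  qed
  have GGi: "G * Gi = 1\<^sub>m q"
  proof -
    have "G * Gi = (1 / det G) \<cdot>\<^sub>m (G * adj_mat G)"
      unfolding Gi_def using mult_smult_distrib[OF G adj_mat(1)[OF G]] .
    also have "\<dots> = (1 / det G) \<cdot>\<^sub>m (det G \<cdot>\<^sub>m 1\<^sub>m q)" using adj_mat(2)[OF G] by simp
    also have "\<dots> = 1\<^sub>m q" by (rule eq_matI) (use dG in auto)
    finally show ?thesis .
  qed
  have Git: "transpose_mat Gi = Gi"
  proof -
    have "transpose_mat Gi = transpose_mat Gi * (G * Gi)" using GGi Gi by simp
    also have "\<dots> = (transpose_mat Gi * transpose_mat G) * Gi" using Gi G Gt by simp
    also have "transpose_mat Gi * transpose_mat G = transpose_mat (G * Gi)"
      using transpose_mult[OF G Gi] by simp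
    also have "\<dots> = 1\<^sub>m q" using GGi by simp
    finally show ?thesis using Gi by simp
  qed
  define X where "X = Gi * Mt"
  have X: "X \<in> carrier_mat q p" unfolding X_def using Gi Mt by simp
  have XM: "X * M = 1\<^sub>m q" unfolding X_def using Gi Mt M GiG G_def by simp
  let ?P = "\<lambda>X. X \<in> carrier_mat (dim_col M) (dim_row M) \<and>
     M * X * M = M \<and> X * M * X = X \<and>
     transpose_mat (M * X) = M * X \<and> transpose_mat (X * M) = X * M"
  have PX: "?P X"
  proof (intro conjI)
    show "X \<in> carrier_mat (dim_col M) (dim_row M)" using X M by simp
    show "M * X * M = M" using M X XM by simp
    show "X * M * X = X" using M X XM by simp
    show "transpose_mat (X * M) = X * M" using XM by simp
    have "transpose_mat (M * X) = transpose_mat X * transpose_mat M" using transpose_mult[OF M X] .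
    also have "transpose_mat X = transpose_mat Mt * transpose_mat Gi"
      unfolding X_def using transpose_mult[OF Gi Mt] .
    also have "\<dots> = M * Gi" using Git unfolding Mt_def by simp
    also have "M * Gi * transpose_mat M = M * X" unfolding X_def Mt_def
      using M Gi by simp
    finally show "transpose_mat (M * X) = M * X" .
  qed
  have uniq: "Y = X" if PY: "?P Y" for Y
  proof -
    have Y: "Y \<in> carrier_mat q p" using PY M by simp
    have YM: "Y * M = 1\<^sub>m q"
    proof (rule mat_eq_by_vec[of _ q q])
      show "Y * M \<in> carrier_mat q q" using Y M by simp
      show "1\<^sub>m q \<in> carrier_mat q q" by simp
      fix z :: "real vec" assume z: "z \<in> carrier_vec q"
      have e1: "(Y * M) *\<^sub>v z = Y *\<^sub>v (M *\<^sub>v z)" using M Y z by simp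
      have e2: "(M * Y * M) *\<^sub>v z = (M * Y) *\<^sub>v (M *\<^sub>v z)" using M Y z
        by (intro assoc_mult_mat_vec[of _ p p]) auto
      have e3: "(M * Y) *\<^sub>v (M *\<^sub>v z) = M *\<^sub>v (Y *\<^sub>v (M *\<^sub>v z))" using M Y z
        by (intro assoc_mult_mat_vec[of _ p q]) auto
      have "M *\<^sub>v ((Y * M) *\<^sub>v z) = (M * Y * M) *\<^sub>v z" using e1 e2 e3 by simp
      also have "\<dots> = M *\<^sub>v z" using PY by simp
      finally have "M *\<^sub>v ((Y * M) *\<^sub>v z - z) = 0\<^sub>v p"
        using M Y z by (simp add: mult_minus_distrib_mat_vec)
      then have "(Y * M) *\<^sub>v z - z = 0\<^sub>v q" using inj[of "(Y * M) *\<^sub>v z - z"] Y M z by simp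
      then have "(Y * M) *\<^sub>v z = z"
      proof -
        assume h: "(Y * M) *\<^sub>v z - z = 0\<^sub>v q"
        show ?thesis
        proof (rule eq_vecI)
          fix i assume "i < dim_vec z"
          then have "((Y * M) *\<^sub>v z - z) $ i = 0" using h z by simp
          then show "((Y * M) *\<^sub>v z) $ i = z $ i" using \<open>i < dim_vec z\<close> Y M z by simp
        qed (use Y M z in simp)
      qed
      then show "(Y * M) *\<^sub>v z = 1\<^sub>m q *\<^sub>v z" using z by simp
    qed
    have sym: "transpose_mat Y * Mt = M * Y"
      using PY transpose_mult[OF M Y] unfolding Mt_def by simp
    have "G * Y = Mt * (M * Y)" unfolding G_def using Mt M Y by simp
    also have "\<dots> = Mt * (transpose_mat Y * Mt)" using sym by simp
    also have "\<dots> = (Mt * transpose_mat Y) * Mt" using Mt Y by simp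
    also have "Mt * transpose_mat Y = transpose_mat (Y * M)"
      unfolding Mt_def using transpose_mult[OF Y M] by simp
    also have "\<dots> = 1\<^sub>m q" using YM by simp
    finally have GY: "G * Y = Mt" using Mt by simp
    have "Y = (Gi * G) * Y" using GiG Y by simp
    also have "\<dots> = Gi * (G * Y)" using Gi G Y by simp
    finally show "Y = X" using GY unfolding X_def by simp
  qed
  have "pinv M = X" unfolding pinv_def using PX uniq by (rule the_equality)
  then show "pinv M \<in> carrier_mat q p" using X by simp
  fix x :: "real vec" assume x: "x \<in> carrier_vec q"
  have "pinv M *\<^sub>v (M *\<^sub>v x) = (X * M) *\<^sub>v x" using \<open>pinv M = X\<close> X M x by simp
  then show "pinv M *\<^sub>v (M *\<^sub>v x) = x" using XM x by simp
qed

lemma sum_lessThan_add: "(\<Sum>j<a+(b::nat). f j) = (\<Sum>j<a. f j) + (\<Sum>j<b. f (a+j))"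
  by (induction b) (simp_all add: add.assoc)

lemma sum_blocks: "(\<Sum>j<L*m. (f::nat\<Rightarrow>'a::comm_monoid_add) j) = (\<Sum>l<L. \<Sum>d<m. f (l*m+d))"
proof (induction L)
  case 0 show ?case by simp
next
  case (Suc L)
  have "(\<Sum>j<Suc L*m. f j) = (\<Sum>j<L*m + m. f j)" by (simp add: add.commute)
  also have "\<dots> = (\<Sum>j<L*m. f j) + (\<Sum>d<m. f (L*m+d))" by (rule sum_lessThan_add)
  finally show ?case using Suc by simp
qed

lemma sum_prefix:
  fixes k L :: nat
  assumes "k \<le> L"
  shows "(\<Sum>l<L. if l < k then g l else 0) = (\<Sum>l<k. (g l::'a::comm_monoid_add))"
proof -
  have "(\<Sum>l<L. if l < k then g l else 0) = (\<Sum>l\<in>{..<L}. if l \<in> {..<k} then g l else 0)"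
    by simp
  also have "\<dots> = sum g ({..<L} \<inter> {..<k})" by (rule sum.inter_restrict[symmetric]) simp
  also have "{..<L} \<inter> {..<k} = {..<k}" using assms by auto
  finally show ?thesis .
qed

lemma sum_delta_at:
  fixes K a :: nat
  shows "(\<Sum>j<K. (if j = a then (1::real) else 0) * f j) = (if a < K then f a else 0)"
proof -
  have "(\<Sum>j<K. (if j = a then (1::real) else 0) * f j) = (\<Sum>j<K. if j = a then f j else 0)"
    by (rule sum.cong) auto
  also have "\<dots> = (if a < K then f a else 0)" by (subst sum.delta) auto
  finally show ?thesis .
qed

lemma sum_delta_shift:
  fixes K a i :: nat
  shows "(\<Sum>j<K. (if i = a + j then (1::real) else 0) * f j) = (if a \<le> i \<and> i < a + K then f (i - a) else 0)"
proof (cases "a \<le> i")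
  case True
  have "(\<Sum>j<K. (if i = a + j then (1::real) else 0) * f j) =
        (\<Sum>j<K. (if j = i - a then 1 else 0) * f j)"
  proof (intro sum.cong refl)
    fix x
    have "(i = a + x) = (x = i - a)" using True by arith
    then show "(if i = a + x then (1::real) else 0) * f x = (if x = i - a then 1 else 0) * f x" by simp
  qed
  also have "\<dots> = (if i - a < K then f (i - a) else 0)" by (rule sum_delta_at)
  finally show ?thesis using True by auto
next
  case False
  then show ?thesis by (auto intro!: sum.neutral)
qed

lemma idx_lt: "k < L \<Longrightarrow> c < r \<Longrightarrow> k * r + c < L * (r::nat)"
proof -
  assume "k < L" "c < r"
  then have "k * r + c < Suc k * r" by simp
  also have "\<dots> \<le> L * r" using \<open>k < L\<close> by (intro mult_le_mono1) simp
  finally show ?thesis .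
qed

lemma divmod_blk: "c < (r::nat) \<Longrightarrow> (k * r + c) div r = k" "c < r \<Longrightarrow> (k * r + c) mod r = c"
  by auto

definition vsum :: "nat \<Rightarrow> (nat \<Rightarrow> real vec) \<Rightarrow> nat \<Rightarrow> real vec" where
  "vsum d f K = vec d (\<lambda>i. \<Sum>k<K. f k $ i)"

lemma vsum_carrier[simp]: "vsum d f K \<in> carrier_vec d" and vsum_dim[simp]: "dim_vec (vsum d f K) = d"
  by (auto simp: vsum_def)

lemma vsum_index: "i < d \<Longrightarrow> vsum d f K $ i = (\<Sum>k<K. f k $ i)"
  by (simp add: vsum_def)

lemma vsum_0: "vsum d f 0 = 0\<^sub>v d"
  by (intro eq_vecI) (auto simp: vsum_def)

lemma vsum_Suc: "f K \<in> carrier_vec d \<Longrightarrow> vsum d f (Suc K) = vsum d f K + f K"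
  by (intro eq_vecI) (auto simp: vsum_def)

lemma vsum_Suc_shift: "f 0 \<in> carrier_vec d \<Longrightarrow> vsum d f (Suc K) = f 0 + vsum d (\<lambda>k. f (Suc k)) K"
  by (intro eq_vecI) (auto simp del: sum.lessThan_Suc simp add: vsum_def sum.lessThan_Suc_shift)

lemma mult_vsum:
  fixes M :: "real mat"
  assumes M: "M \<in> carrier_mat p d" and f: "\<And>k. k < K \<Longrightarrow> f k \<in> carrier_vec d"
  shows "M *\<^sub>v vsum d f K = vsum p (\<lambda>k. M *\<^sub>v f k) K"
proof (rule eq_vecI)
  fix i assume "i < dim_vec (vsum p (\<lambda>k. M *\<^sub>v f k) K)"
  then have i: "i < p" by simp
  have "(M *\<^sub>v vsum d f K) $ i = (\<Sum>j<d. M $$ (i,j) * (\<Sum>k<K. f k $ j))"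
    using M i by (subst mv_entry) (auto simp: vsum_index)
  also have "\<dots> = (\<Sum>k<K. \<Sum>j<d. M $$ (i,j) * f k $ j)"
    by (simp add: sum_distrib_left sum.swap[of _ "{..<d}"])
  also have "\<dots> = (\<Sum>k<K. (M *\<^sub>v f k) $ i)"
    using M i f by (intro sum.cong refl) (subst mv_entry, auto)
  finally show "(M *\<^sub>v vsum d f K) $ i = vsum p (\<lambda>k. M *\<^sub>v f k) K $ i"
    using i by (simp add: vsum_index)
qed (use M in simp)

definition blk :: "nat \<Rightarrow> real vec \<Rightarrow> nat \<Rightarrow> real vec" where
  "blk q w l = vec q (\<lambda>d. w $ (l * q + d))"

lemma blk_carrier[simp]: "blk q w l \<in> carrier_vec q" and blk_dim[simp]: "dim_vec (blk q w l) = q"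
  by (auto simp: blk_def)

lemma blk_index[simp]: "d < q \<Longrightarrow> blk q w l $ d = w $ (l * q + d)"
  by (simp add: blk_def)

lemma hcat_mv:
  fixes P Q :: "real mat"
  assumes P: "P \<in> carrier_mat p a" and Q: "Q \<in> carrier_mat p b" and v: "v \<in> carrier_vec (a + b)"
  shows "hcat P Q *\<^sub>v v = P *\<^sub>v vec a (\<lambda>i. v $ i) + Q *\<^sub>v vec b (\<lambda>i. v $ (a + i))"
proof (rule eq_vecI)
  fix i assume "i < dim_vec (P *\<^sub>v vec a (\<lambda>i. v $ i) + Q *\<^sub>v vec b (\<lambda>i. v $ (a + i)))"
  then have i: "i < p" using P Q by simp
  have "(hcat P Q *\<^sub>v v) $ i = (\<Sum>j<a+b. hcat P Q $$ (i,j) * v $ j)"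
    using P Q v i by (subst mv_entry) (auto simp: hcat_def)
  also have "\<dots> = (\<Sum>j<a. P $$ (i,j) * v $ j) + (\<Sum>j<b. Q $$ (i,j) * v $ (a + j))"
    unfolding sum_lessThan_add using P Q i by (simp add: hcat_def)
  also have "\<dots> = (P *\<^sub>v vec a (\<lambda>i. v $ i)) $ i + (Q *\<^sub>v vec b (\<lambda>i. v $ (a + i))) $ i"
  proof -
    have e1: "(P *\<^sub>v vec a (\<lambda>i. v $ i)) $ i = (\<Sum>j<a. P $$ (i, j) * v $ j)"
      using P i by (subst mv_entry) auto
    have e2: "(Q *\<^sub>v vec b (\<lambda>i. v $ (a + i))) $ i = (\<Sum>j<b. Q $$ (i, j) * v $ (a + j))"
      using Q i by (subst mv_entry) auto
    show ?thesis using e1 e2 by simp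
  qed
  finally show "(hcat P Q *\<^sub>v v) $ i = (P *\<^sub>v vec a (\<lambda>i. v $ i) + Q *\<^sub>v vec b (\<lambda>i. v $ (a + i))) $ i"
    using P Q i by simp
qed (use P Q in \<open>simp add: hcat_def\<close>)

lemma pow_mat_commute:
  fixes A :: "real mat"
  assumes A: "A \<in> carrier_mat n n"
  shows "A * A ^\<^sub>m k = A ^\<^sub>m k * A"
proof (induction k)
  case 0 then show ?case using A by simp
next
  case (Suc k)
  have "A * A ^\<^sub>m Suc k = (A * A ^\<^sub>m k) * A"
    using A by (simp add: assoc_mult_mat[of A n n "A ^\<^sub>m k" n A n])
  also have "\<dots> = A ^\<^sub>m Suc k * A" using Suc by simp
  finally show ?case .
qed

locale lti =
  fixes n m r L :: nat and A B C :: "real mat"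
  assumes A: "A \<in> carrier_mat n n" and B: "B \<in> carrier_mat n m" and C: "C \<in> carrier_mat r n"
begin

abbreviation "Ob \<equiv> obs_mat L A C"
abbreviation "Hm \<equiv> toeplitz_mat L A B C"
abbreviation "Rm \<equiv> reach_mat L A B"
abbreviation "Gm \<equiv> Gamma_mat L A B C"
abbreviation "Th \<equiv> Theta_mat L A B C"
abbreviation "Pm \<equiv> Pi_mat L m r"

lemma dims[simp]: "dim_row A = n" "dim_col A = n" "dim_row B = n" "dim_col B = m"
  "dim_row C = r" "dim_col C = n"
  using A B C by auto

lemma Ob_carrier: "Ob \<in> carrier_mat (L*r) n" by (simp add: obs_mat_def)
lemma Hm_carrier: "Hm \<in> carrier_mat (L*r) (L*m)" by (simp add: toeplitz_mat_def)
lemma reach_carrier: "reach_mat K A B \<in> carrier_mat n (K*m)" by (simp add: reach_mat_def)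
lemma Pm_carrier: "Pm \<in> carrier_mat (L*(m+r)) m" by (simp add: Pi_mat_def)

lemma Apow_carrier[simp]: "A ^\<^sub>m k \<in> carrier_mat n n" using A by simp
lemma CA_carrier[simp]: "C * A ^\<^sub>m k \<in> carrier_mat r n" using A C by simp
lemma CAB_carrier[simp]: "C * A ^\<^sub>m k * B \<in> carrier_mat r m" using mult_carrier_mat[OF CA_carrier B] .
lemma AB_carrier[simp]: "A ^\<^sub>m k * B \<in> carrier_mat n m" using mult_carrier_mat[OF Apow_carrier B] .

lemma Ob_mv:
  assumes k: "k < L" and c: "c < r" and x: "x \<in> carrier_vec n"
  shows "(Ob *\<^sub>v x) $ (k*r+c) = ((C * A ^\<^sub>m k) *\<^sub>v x) $ c"
proof -
  have kr: "k*r+c < L*r" using idx_lt[OF k c] .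
  have "(Ob *\<^sub>v x) $ (k*r+c) = (\<Sum>j<n. Ob $$ (k*r+c, j) * x $ j)"
    using kr x by (subst mv_entry) (auto simp: obs_mat_def)
  also have "\<dots> = (\<Sum>j<n. (C * A ^\<^sub>m k) $$ (c, j) * x $ j)"
    using kr c by (intro sum.cong refl) (simp add: obs_mat_def divmod_blk)
  also have "\<dots> = ((C * A ^\<^sub>m k) *\<^sub>v x) $ c"
    using c x by (subst mv_entry) auto
  finally show ?thesis .
qed

lemma Hm_mv:
  assumes k: "k < L" and c: "c < r" and w: "w \<in> carrier_vec (L*m)"
  shows "(Hm *\<^sub>v w) $ (k*r+c) = (\<Sum>l<k. ((C * A ^\<^sub>m (k-1-l) * B) *\<^sub>v blk m w l) $ c)"
proof -
  have kr: "k*r+c < L*r" using idx_lt[OF k c] .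
  have "(Hm *\<^sub>v w) $ (k*r+c) = (\<Sum>j<L*m. Hm $$ (k*r+c, j) * w $ j)"
    using kr w by (subst mv_entry) (auto simp: toeplitz_mat_def)
  also have "\<dots> = (\<Sum>l<L. \<Sum>d<m. Hm $$ (k*r+c, l*m+d) * w $ (l*m+d))"
    by (rule sum_blocks)
  also have "\<dots> = (\<Sum>l<L. if l < k then (\<Sum>d<m. (C * A ^\<^sub>m (k-1-l) * B) $$ (c, d) * w $ (l*m+d)) else 0)"
  proof (intro sum.cong refl)
    fix l assume l: "l \<in> {..<L}"
    show "(\<Sum>d<m. Hm $$ (k*r+c, l*m+d) * w $ (l*m+d)) =
      (if l < k then (\<Sum>d<m. (C * A ^\<^sub>m (k-1-l) * B) $$ (c, d) * w $ (l*m+d)) else 0)"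
    proof (cases "l < k")
      case True
      show ?thesis
      proof (simp only: True if_True, intro sum.cong refl)
        fix d assume d: "d \<in> {..<m}"
        have ld: "l*m+d < L*m" using idx_lt[of l L d m] l d by simp
        have "Hm $$ (k*r+c, l*m+d) = markov A B C (k - l) $$ (c, d)"
          using kr ld c d True by (simp add: toeplitz_mat_def divmod_blk)
        also have "\<dots> = (C * A ^\<^sub>m (k-1-l) * B) $$ (c, d)"
          using True by (simp add: markov_def diff_commute)
        finally show "Hm $$ (k*r+c, l*m+d) * w $ (l*m+d) = (C * A ^\<^sub>m (k-1-l) * B) $$ (c, d) * w $ (l*m+d)"
          by simp
      qed
    next
      case False
      have "Hm $$ (k*r+c, l*m+d) = 0" if d: "d < m" for d
      proof -
        have ld: "l*m+d < L*m" using idx_lt[of l L d m] l d by simp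
        show ?thesis
        proof (cases "l = k")
          case True
          then show ?thesis using kr ld c d by (simp add: toeplitz_mat_def divmod_blk markov_def)
        next
          case False
          then show ?thesis using \<open>\<not> l < k\<close> kr ld c d by (simp add: toeplitz_mat_def divmod_blk)
        qed
      qed
      then show ?thesis using False by simp
    qed
  qed
  also have "\<dots> = (\<Sum>l<k. \<Sum>d<m. (C * A ^\<^sub>m (k-1-l) * B) $$ (c, d) * w $ (l*m+d))"
    using k by (intro sum_prefix) simp
  also have "\<dots> = (\<Sum>l<k. ((C * A ^\<^sub>m (k-1-l) * B) *\<^sub>v blk m w l) $ c)"
    using c by (intro sum.cong refl) (subst mv_entry, auto)
  finally show ?thesis .
qed

lemma reach_mv:
  assumes i: "i < n" and w: "w \<in> carrier_vec (K*m)"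
  shows "(reach_mat K A B *\<^sub>v w) $ i = (\<Sum>l<K. ((A ^\<^sub>m (K-1-l) * B) *\<^sub>v blk m w l) $ i)"
proof -
  have "(reach_mat K A B *\<^sub>v w) $ i = (\<Sum>j<K*m. reach_mat K A B $$ (i, j) * w $ j)"
    using i w by (subst mv_entry) (auto simp: reach_mat_def)
  also have "\<dots> = (\<Sum>l<K. \<Sum>d<m. reach_mat K A B $$ (i, l*m+d) * w $ (l*m+d))"
    by (rule sum_blocks)
  also have "\<dots> = (\<Sum>l<K. \<Sum>d<m. (A ^\<^sub>m (K-1-l) * B) $$ (i, d) * w $ (l*m+d))"
  proof (intro sum.cong refl)
    fix l d assume l: "l \<in> {..<K}" and d: "d \<in> {..<m}"
    have ld: "l*m+d < K*m" using idx_lt[of l K d m] l d by simp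
    show "reach_mat K A B $$ (i, l*m+d) * w $ (l*m+d) = (A ^\<^sub>m (K-1-l) * B) $$ (i, d) * w $ (l*m+d)"
      using ld i d by (simp add: reach_mat_def divmod_blk)
  qed
  also have "\<dots> = (\<Sum>l<K. ((A ^\<^sub>m (K-1-l) * B) *\<^sub>v blk m w l) $ i)"
    using i by (intro sum.cong refl) (subst mv_entry, auto)
  finally show ?thesis .
qed

lemma reach_vsum:
  assumes w: "w \<in> carrier_vec (K*m)"
  shows "reach_mat K A B *\<^sub>v w = vsum n (\<lambda>l. (A ^\<^sub>m (K-1-l) * B) *\<^sub>v blk m w l) K"
proof (rule eq_vecI)
  fix i assume "i < dim_vec (vsum n (\<lambda>l. (A ^\<^sub>m (K-1-l) * B) *\<^sub>v blk m w l) K)"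
  then have i: "i < n" by simp
  show "(reach_mat K A B *\<^sub>v w) $ i = vsum n (\<lambda>l. (A ^\<^sub>m (K-1-l) * B) *\<^sub>v blk m w l) K $ i"
    unfolding reach_mv[OF i w] vsum_index[OF i] ..
qed (use reach_carrier[of K] in simp)

lemma state_formula:
  assumes x0: "x0 \<in> carrier_vec n" and u: "\<And>t. u t \<in> carrier_vec m"
  shows "state A B x0 u (s + k) = A ^\<^sub>m k *\<^sub>v state A B x0 u s
           + vsum n (\<lambda>l. (A ^\<^sub>m (k-1-l) * B) *\<^sub>v u (s + l)) k"
proof (induction k)
  case 0
  have "state A B x0 u s \<in> carrier_vec n"
  proof (induction s)
    case (Suc s) then show ?case using A B u by simp
  qed (use x0 in simp)
  then show ?case by (simp add: vsum_0)
next
  case (Suc k)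
  have sc: "state A B x0 u t \<in> carrier_vec n" for t
  proof (induction t)
    case (Suc s) then show ?case using A B u by simp
  qed (use x0 in simp)
  let ?f = "\<lambda>k l. (A ^\<^sub>m (k-1-l) * B) *\<^sub>v u (s + l)"
  have fc: "?f k l \<in> carrier_vec n" for k l using mult_mat_vec_carrier[OF AB_carrier u] .
  have "state A B x0 u (s + Suc k) = A *\<^sub>v state A B x0 u (s + k) + B *\<^sub>v u (s + k)" by simp
  also have "\<dots> = A *\<^sub>v (A ^\<^sub>m k *\<^sub>v state A B x0 u s + vsum n (?f k) k) + B *\<^sub>v u (s + k)"
    using Suc by simp
  also have "\<dots> = (A *\<^sub>v (A ^\<^sub>m k *\<^sub>v state A B x0 u s) + vsum n (\<lambda>l. A *\<^sub>v ?f k l) k) + B *\<^sub>v u (s + k)"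
  proof -
    have "A *\<^sub>v (A ^\<^sub>m k *\<^sub>v state A B x0 u s + vsum n (?f k) k)
        = A *\<^sub>v (A ^\<^sub>m k *\<^sub>v state A B x0 u s) + A *\<^sub>v vsum n (?f k) k"
      using mult_add_distrib_mat_vec[OF A mult_mat_vec_carrier[OF Apow_carrier sc] vsum_carrier] .
    moreover have "A *\<^sub>v vsum n (?f k) k = vsum n (\<lambda>l. A *\<^sub>v ?f k l) k"
      using mult_vsum[OF A, of k "?f k"] fc by simp
    ultimately show ?thesis by simp
  qed
  also have "A *\<^sub>v (A ^\<^sub>m k *\<^sub>v state A B x0 u s) = A ^\<^sub>m Suc k *\<^sub>v state A B x0 u s"
  proof -
    have "A *\<^sub>v (A ^\<^sub>m k *\<^sub>v state A B x0 u s) = (A * A ^\<^sub>m k) *\<^sub>v state A B x0 u s"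
      using A sc by (simp add: assoc_mult_mat_vec[of A n n "A ^\<^sub>m k" n])
    then show ?thesis using pow_mat_commute[OF A] by simp
  qed
  also have "vsum n (\<lambda>l. A *\<^sub>v ?f k l) k = vsum n (?f (Suc k)) k"
  proof (rule eq_vecI)
    fix i assume "i < dim_vec (vsum n (?f (Suc k)) k)"
    then have i: "i < n" by simp
    have "A *\<^sub>v ?f k l = ?f (Suc k) l" if l: "l < k" for l
    proof -
      have "A *\<^sub>v ?f k l = (A * (A ^\<^sub>m (k-1-l) * B)) *\<^sub>v u (s + l)"
        using A B u[of "s+l"] by (simp add: assoc_mult_mat_vec[of A n n _ m])
      also have "A * (A ^\<^sub>m (k-1-l) * B) = (A * A ^\<^sub>m (k-1-l)) * B"
        using A B by (simp add: assoc_mult_mat[of A n n _ n B m])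
      also have "\<dots> = A ^\<^sub>m (Suc k - 1 - l) * B"
      proof -
        have e: "Suc k - 1 - l = Suc (k - 1 - l)" using l by arith
        show ?thesis unfolding e using pow_mat_commute[OF A] by simp
      qed
      finally show ?thesis .
    qed
    then show "vsum n (\<lambda>l. A *\<^sub>v ?f k l) k $ i = vsum n (?f (Suc k)) k $ i"
      using i by (simp add: vsum_index)
  qed simp
  also have "B *\<^sub>v u (s + k) = ?f (Suc k) k"
    using B u[of "s+k"] by simp
  finally have eq: "state A B x0 u (s + Suc k) = A ^\<^sub>m Suc k *\<^sub>v state A B x0 u s
     + vsum n (?f (Suc k)) k + ?f (Suc k) k" .
  have "vsum n (?f (Suc k)) (Suc k) = vsum n (?f (Suc k)) k + ?f (Suc k) k"
    by (rule vsum_Suc) (rule mult_mat_vec_carrier[OF AB_carrier u])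
  then show ?case unfolding eq
    using mult_mat_vec_carrier[OF Apow_carrier sc, of "Suc k" s] mult_mat_vec_carrier[OF AB_carrier u, of "Suc k - 1 - k" "s+k"]
    by simp
qed

end

lemma shift_entry:
  assumes "i < L*k" "j < L*k"
  shows "shift_mat L k $$ (i,j) = (if j = i + k then 1 else 0)"
proof -
  have k: "k > 0" using assms by (cases k) auto
  have "(j div k = i div k + 1 \<and> j mod k = i mod k) \<longleftrightarrow> j = i + k"
  proof
    assume h: "j div k = i div k + 1 \<and> j mod k = i mod k"
    have "j = k * (j div k) + j mod k" by simp
    also have "\<dots> = k * (i div k) + i mod k + k" using h by (simp add: algebra_simps)
    also have "\<dots> = i + k" by simp
    finally show "j = i + k" .
  next
    assume "j = i + k"
    then show "j div k = i div k + 1 \<and> j mod k = i mod k" using k by simp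
  qed
  then show ?thesis using assms by (simp add: shift_mat_def)
qed

locale lti_obs = lti +
  assumes Ob_inj: "\<And>x. x \<in> carrier_vec n \<Longrightarrow> Ob *\<^sub>v x = 0\<^sub>v (L*r) \<Longrightarrow> x = 0\<^sub>v n"
    and Lpos: "0 < L"
begin

lemma N_eq: "L*(m+r) = L*m + L*r" by (simp add: algebra_simps)

lemma pO: "pinv Ob \<in> carrier_mat n (L*r)" "\<And>x. x \<in> carrier_vec n \<Longrightarrow> pinv Ob *\<^sub>v (Ob *\<^sub>v x) = x"
  using pinv_left[OF Ob_carrier Ob_inj] by auto

abbreviation "P1 \<equiv> reach_mat L A B - A ^\<^sub>m L * pinv Ob * Hm"
abbreviation "P2 \<equiv> A ^\<^sub>m L * pinv Ob"

lemma P2_carrier: "P2 \<in> carrier_mat n (L*r)" using mult_carrier_mat[OF Apow_carrier pO(1)] .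
lemma P1_carrier: "P1 \<in> carrier_mat n (L*m)"
  using mult_carrier_mat[OF P2_carrier Hm_carrier] reach_carrier[of L] by (intro minus_carrier_mat) auto

lemma Gm_def': "Gm = hcat P1 P2" by (simp add: Gamma_mat_def)

lemma Gm_carrier: "Gm \<in> carrier_mat n (L*(m+r))"
  using P1_carrier P2_carrier Hm_carrier pO(1) unfolding Gm_def' N_eq carrier_mat_def by (simp add: hcat_def)

definition iohv :: "real vec \<Rightarrow> real vec \<Rightarrow> real vec" where
  "iohv x w = vec (L*(m+r)) (\<lambda>i. if i < L*m then w $ i else (Ob *\<^sub>v x + Hm *\<^sub>v w) $ (i - L*m))"

lemma iohv_carrier[simp]: "iohv x w \<in> carrier_vec (L*(m+r))" and iohv_dim[simp]: "dim_vec (iohv x w) = L*(m+r)"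
  by (auto simp: iohv_def)

lemma iohv_u: "i < L*m \<Longrightarrow> iohv x w $ i = w $ i"
  by (simp add: iohv_def N_eq)

lemma iohv_y: "j < L*r \<Longrightarrow> iohv x w $ (L*m + j) = (Ob *\<^sub>v x + Hm *\<^sub>v w) $ j"
  by (simp add: iohv_def N_eq)

lemma Gm_iohv:
  assumes x: "x \<in> carrier_vec n" and w: "w \<in> carrier_vec (L*m)"
  shows "Gm *\<^sub>v iohv x w = A ^\<^sub>m L *\<^sub>v x + reach_mat L A B *\<^sub>v w"
proof -
  let ?v = "iohv x w"
  have v: "?v \<in> carrier_vec (L*m + L*r)" using iohv_carrier[of x w] unfolding N_eq .
  have e1: "vec (L*m) (\<lambda>i. ?v $ i) = w" using w by (intro eq_vecI) (auto simp: iohv_u)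
  have e2: "vec (L*r) (\<lambda>i. ?v $ (L*m + i)) = Ob *\<^sub>v x + Hm *\<^sub>v w"
    using Ob_carrier Hm_carrier by (intro eq_vecI) (auto simp: iohv_y)
  have "Gm *\<^sub>v ?v = P1 *\<^sub>v w + P2 *\<^sub>v (Ob *\<^sub>v x + Hm *\<^sub>v w)"
    unfolding Gm_def' hcat_mv[OF P1_carrier P2_carrier v] e1 e2 ..
  also have "P1 *\<^sub>v w = reach_mat L A B *\<^sub>v w - P2 *\<^sub>v (Hm *\<^sub>v w)"
  proof -
    have "P1 *\<^sub>v w = reach_mat L A B *\<^sub>v w - (P2 * Hm) *\<^sub>v w"
      using reach_carrier[of L] mult_carrier_mat[OF P2_carrier Hm_carrier] w
      by (subst minus_mult_distrib_mat_vec) auto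
    also have "(P2 * Hm) *\<^sub>v w = P2 *\<^sub>v (Hm *\<^sub>v w)"
      using P2_carrier Hm_carrier w by (rule assoc_mult_mat_vec)
    finally show ?thesis .
  qed
  also have "P2 *\<^sub>v (Ob *\<^sub>v x + Hm *\<^sub>v w) = P2 *\<^sub>v (Ob *\<^sub>v x) + P2 *\<^sub>v (Hm *\<^sub>v w)"
    using P2_carrier Ob_carrier Hm_carrier x w
    by (intro mult_add_distrib_mat_vec) auto
  also have "P2 *\<^sub>v (Ob *\<^sub>v x) = A ^\<^sub>m L *\<^sub>v x"
  proof -
    have "P2 *\<^sub>v (Ob *\<^sub>v x) = A ^\<^sub>m L *\<^sub>v (pinv Ob *\<^sub>v (Ob *\<^sub>v x))"
      using pO(1) Ob_carrier x by (intro assoc_mult_mat_vec) auto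
    then show ?thesis using pO(2)[OF x] by simp
  qed
  finally show ?thesis
    using reach_carrier[of L] P2_carrier Hm_carrier w x
    by (intro eq_vecI) auto
qed

definition shin :: "real vec \<Rightarrow> real vec \<Rightarrow> real vec" where
  "shin w uu = vec (L*m) (\<lambda>i. if i + m < L*m then w $ (i+m) else uu $ (i - (L-1)*m))"

lemma shin_carrier[simp]: "shin w uu \<in> carrier_vec (L*m)" by (simp add: shin_def)

definition Yv :: "nat \<Rightarrow> nat \<Rightarrow> real vec \<Rightarrow> real vec \<Rightarrow> real" where
  "Yv k c x w = ((C * A ^\<^sub>m k) *\<^sub>v x) $ c + (\<Sum>l<k. ((C * A ^\<^sub>m (k-1-l) * B) *\<^sub>v blk m w l) $ c)"

lemma ObHm_Yv:
  assumes k: "k < L" and c: "c < r" and x: "x \<in> carrier_vec n" and w: "w \<in> carrier_vec (L*m)"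
  shows "(Ob *\<^sub>v x + Hm *\<^sub>v w) $ (k*r+c) = Yv k c x w"
  using idx_lt[OF k c] Ob_carrier Hm_carrier
  by (simp add: Ob_mv[OF k c x] Hm_mv[OF k c w] Yv_def)

lemma blk_shin:
  assumes "Suc l < L" "w \<in> carrier_vec (L*m)"
  shows "blk m (shin w uu) l = blk m w (Suc l)"
proof (rule eq_vecI)
  fix d assume "d < dim_vec (blk m w (Suc l))"
  then have d: "d < m" by simp
  have "Suc l * m + d < L * m" using idx_lt[OF assms(1) d] .
  then show "blk m (shin w uu) l $ d = blk m w (Suc l) $ d"
    using d by (simp add: shin_def algebra_simps)
qed simp

lemma blk0: "w \<in> carrier_vec (L*m) \<Longrightarrow> blk m w 0 = vec m (\<lambda>d. w $ d)"
  by (intro eq_vecI) auto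

lemma next_Yv:
  assumes k: "k < L" and c: "c < r" and x: "x \<in> carrier_vec n" and w: "w \<in> carrier_vec (L*m)"
    and uu: "uu \<in> carrier_vec m"
  shows "(Ob *\<^sub>v (A *\<^sub>v x + B *\<^sub>v blk m w 0) + Hm *\<^sub>v shin w uu) $ (k*r+c) = Yv (Suc k) c x w"
proof -
  let ?x' = "A *\<^sub>v x + B *\<^sub>v blk m w 0"
  have x': "?x' \<in> carrier_vec n" using A B x by simp
  have "(Ob *\<^sub>v ?x' + Hm *\<^sub>v shin w uu) $ (k*r+c) = Yv k c ?x' (shin w uu)"
    by (rule ObHm_Yv[OF k c x' shin_carrier])
  also have "\<dots> = ((C * A ^\<^sub>m k) *\<^sub>v ?x') $ c + (\<Sum>l<k. ((C * A ^\<^sub>m (k-1-l) * B) *\<^sub>v blk m w (Suc l)) $ c)"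
    unfolding Yv_def using k w by (simp add: blk_shin)
  also have "(C * A ^\<^sub>m k) *\<^sub>v ?x' = (C * A ^\<^sub>m Suc k) *\<^sub>v x + (C * A ^\<^sub>m k * B) *\<^sub>v blk m w 0"
  proof -
    have "(C * A ^\<^sub>m k) *\<^sub>v ?x' = (C * A ^\<^sub>m k) *\<^sub>v (A *\<^sub>v x) + (C * A ^\<^sub>m k) *\<^sub>v (B *\<^sub>v blk m w 0)"
      using A B x by (intro mult_add_distrib_mat_vec[OF CA_carrier]) auto
    also have "(C * A ^\<^sub>m k) *\<^sub>v (A *\<^sub>v x) = (C * A ^\<^sub>m k * A) *\<^sub>v x"
      using A x by (intro assoc_mult_mat_vec[symmetric, OF CA_carrier]) auto
    also have "C * A ^\<^sub>m k * A = C * A ^\<^sub>m Suc k"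
      using assoc_mult_mat[OF C Apow_carrier A, of k] by simp
    also have "(C * A ^\<^sub>m k) *\<^sub>v (B *\<^sub>v blk m w 0) = (C * A ^\<^sub>m k * B) *\<^sub>v blk m w 0"
      using B by (intro assoc_mult_mat_vec[symmetric, OF CA_carrier]) auto
    finally show ?thesis .
  qed
  finally have "(Ob *\<^sub>v ?x' + Hm *\<^sub>v shin w uu) $ (k*r+c) =
     ((C * A ^\<^sub>m Suc k) *\<^sub>v x) $ c + ((C * A ^\<^sub>m k * B) *\<^sub>v blk m w 0) $ c
     + (\<Sum>l<k. ((C * A ^\<^sub>m (k-1-l) * B) *\<^sub>v blk m w (Suc l)) $ c)"
    using c x by simp
  also have "\<dots> = Yv (Suc k) c x w"
    unfolding Yv_def by (simp del: sum.lessThan_Suc add: sum.lessThan_Suc_shift)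
  finally show ?thesis .
qed

end

context lti_obs begin

abbreviation "Dm \<equiv> four_block_mat (shift_mat L m) (0\<^sub>m (L * m) (L * r))
                    (0\<^sub>m (L * r) (L * m)) (shift_mat L r)"
abbreviation "Em \<equiv> E_mat L m r"

lemma shift_dims[simp]: "dim_row (shift_mat L k) = L*k" "dim_col (shift_mat L k) = L*k"
  by (auto simp: shift_mat_def)

lemma Dm_carrier: "Dm \<in> carrier_mat (L*(m+r)) (L*(m+r))"
  unfolding N_eq by (rule four_block_carrier_mat) (auto simp: shift_mat_def)

lemma Em_carrier: "Em \<in> carrier_mat (L*(m+r)) r" by (simp add: E_mat_def)

lemma Th_def': "Th = Dm + Em * C * Gm" by (simp add: Theta_mat_def)

lemma r_le: "r \<le> L*r" using Lpos by simp

lemma Dm_mv: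
  assumes v: "v \<in> carrier_vec (L*(m+r))" and i: "i < L*(m+r)"
  shows "(Dm *\<^sub>v v) $ i = (if i < L*m then (if i + m < L*m then v $ (i+m) else 0)
                            else (if i + r < L*(m+r) then v $ (i+r) else 0))"
proof -
  have "(Dm *\<^sub>v v) $ i = (\<Sum>j<L*m+L*r. Dm $$ (i,j) * v $ j)"
    using Dm_carrier v i unfolding N_eq by (subst mv_entry) auto
  also have "\<dots> = (\<Sum>j<L*m. Dm $$ (i,j) * v $ j) + (\<Sum>j<L*r. Dm $$ (i,L*m+j) * v $ (L*m+j))"
    by (rule sum_lessThan_add)
  finally have s: "(Dm *\<^sub>v v) $ i = (\<Sum>j<L*m. Dm $$ (i,j) * v $ j) + (\<Sum>j<L*r. Dm $$ (i,L*m+j) * v $ (L*m+j))" .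
  show ?thesis
  proof (cases "i < L*m")
    case True
    have "(\<Sum>j<L*m. Dm $$ (i,j) * v $ j) = (\<Sum>j<L*m. (if j = i + m then 1 else 0) * v $ j)"
      using True i by (intro sum.cong refl) (auto simp: shift_entry N_eq)
    also have "\<dots> = (if i + m < L*m then v $ (i+m) else 0)" by (rule sum_delta_at)
    finally have 1: "(\<Sum>j<L*m. Dm $$ (i,j) * v $ j) = (if i + m < L*m then v $ (i+m) else 0)" .
    have 2: "(\<Sum>j<L*r. Dm $$ (i,L*m+j) * v $ (L*m+j)) = 0"
      using True i by (intro sum.neutral) (auto simp: N_eq)
    show ?thesis using True s 1 2 by simp
  next
    case False
    have 1: "(\<Sum>j<L*m. Dm $$ (i,j) * v $ j) = 0"
      using False i by (intro sum.neutral) (auto simp: N_eq)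
    have "(\<Sum>j<L*r. Dm $$ (i,L*m+j) * v $ (L*m+j)) = (\<Sum>j<L*r. (if j = (i - L*m) + r then 1 else 0) * v $ (L*m+j))"
      using False i by (intro sum.cong refl) (auto simp: shift_entry N_eq)
    also have "\<dots> = (if (i - L*m) + r < L*r then v $ (L*m + ((i - L*m) + r)) else 0)" by (rule sum_delta_at)
    also have "\<dots> = (if i + r < L*(m+r) then v $ (i+r) else 0)"
      using False by (auto simp: N_eq)
    finally show ?thesis using False s 1 by simp
  qed
qed

lemma Em_mv:
  assumes z: "z \<in> carrier_vec r" and i: "i < L*(m+r)"
  shows "(Em *\<^sub>v z) $ i = (if L*(m+r) - r \<le> i then z $ (i - (L*(m+r) - r)) else 0)"
proof -
  have "(Em *\<^sub>v z) $ i = (\<Sum>j<r. Em $$ (i,j) * z $ j)"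
    using Em_carrier z i by (subst mv_entry) auto
  also have "\<dots> = (\<Sum>j<r. (if i = (L*(m+r) - r) + j then 1 else 0) * z $ j)"
    using i by (intro sum.cong refl) (simp add: E_mat_def)
  also have "\<dots> = (if L*(m+r) - r \<le> i \<and> i < (L*(m+r) - r) + r then z $ (i - (L*(m+r) - r)) else 0)"
    by (rule sum_delta_shift)
  also have "(L*(m+r) - r) + r = L*(m+r)" using r_le unfolding N_eq by linarith
  finally show ?thesis using i by simp
qed

lemma Pm_mv:
  assumes uu: "uu \<in> carrier_vec m" and i: "i < L*(m+r)"
  shows "(Pm *\<^sub>v uu) $ i = (if (L-1)*m \<le> i \<and> i < L*m then uu $ (i - (L-1)*m) else 0)"
proof -
  have e: "(L-1)*m + m = L*m" using Lpos by (cases L) auto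
  have "(Pm *\<^sub>v uu) $ i = (\<Sum>j<m. (if i = (L-1)*m + j then 1 else 0) * uu $ j)"
    using Pm_carrier uu i by (subst mv_entry) (auto simp: Pi_mat_def)
  also have "\<dots> = (if (L-1)*m \<le> i \<and> i < (L-1)*m + m then uu $ (i - (L-1)*m) else 0)"
    by (rule sum_delta_shift)
  finally show ?thesis using e by simp
qed

lemma Th_carrier: "Th \<in> carrier_mat (L*(m+r)) (L*(m+r))"
  unfolding Th_def' using Dm_carrier mult_carrier_mat[OF mult_carrier_mat[OF Em_carrier C] Gm_carrier]
  by simp

lemma Th_mv:
  assumes v: "v \<in> carrier_vec (L*(m+r))"
  shows "Th *\<^sub>v v = Dm *\<^sub>v v + Em *\<^sub>v (C *\<^sub>v (Gm *\<^sub>v v))"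
proof -
  have EC: "Em * C \<in> carrier_mat (L*(m+r)) n" using mult_carrier_mat[OF Em_carrier C] .
  have "Th *\<^sub>v v = Dm *\<^sub>v v + (Em * C * Gm) *\<^sub>v v"
    unfolding Th_def' using Dm_carrier mult_carrier_mat[OF EC Gm_carrier] v
    by (intro add_mult_distrib_mat_vec) auto
  also have "(Em * C * Gm) *\<^sub>v v = (Em * C) *\<^sub>v (Gm *\<^sub>v v)"
    using EC Gm_carrier v by (rule assoc_mult_mat_vec)
  also have "\<dots> = Em *\<^sub>v (C *\<^sub>v (Gm *\<^sub>v v))"
    using Em_carrier C Gm_carrier v by (intro assoc_mult_mat_vec) auto
  finally show ?thesis .
qed

lemma CRm_Yv:
  assumes c: "c < r" and x: "x \<in> carrier_vec n" and w: "w \<in> carrier_vec (L*m)"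
  shows "(C *\<^sub>v (A ^\<^sub>m L *\<^sub>v x + reach_mat L A B *\<^sub>v w)) $ c = Yv L c x w"
proof -
  have Rw: "reach_mat L A B *\<^sub>v w \<in> carrier_vec n" using reach_carrier[of L] w by simp
  have Ax: "A ^\<^sub>m L *\<^sub>v x \<in> carrier_vec n" using mult_mat_vec_carrier[OF Apow_carrier x] .
  have 1: "C *\<^sub>v (A ^\<^sub>m L *\<^sub>v x + reach_mat L A B *\<^sub>v w) = C *\<^sub>v (A ^\<^sub>m L *\<^sub>v x) + C *\<^sub>v (reach_mat L A B *\<^sub>v w)"
    using mult_add_distrib_mat_vec[OF C Ax Rw] .
  have 2: "C *\<^sub>v (A ^\<^sub>m L *\<^sub>v x) = (C * A ^\<^sub>m L) *\<^sub>v x"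
    using assoc_mult_mat_vec[OF C Apow_carrier x] by simp
  have 3: "C *\<^sub>v (reach_mat L A B *\<^sub>v w) = vsum r (\<lambda>l. C *\<^sub>v ((A ^\<^sub>m (L-1-l) * B) *\<^sub>v blk m w l)) L"
    unfolding reach_vsum[OF w] by (rule mult_vsum[OF C]) (rule mult_mat_vec_carrier[OF AB_carrier blk_carrier])
  have 4: "C *\<^sub>v ((A ^\<^sub>m (L-1-l) * B) *\<^sub>v blk m w l) = (C * A ^\<^sub>m (L-1-l) * B) *\<^sub>v blk m w l" for l
  proof -
    have "C *\<^sub>v ((A ^\<^sub>m (L-1-l) * B) *\<^sub>v blk m w l) = (C * (A ^\<^sub>m (L-1-l) * B)) *\<^sub>v blk m w l"
      using assoc_mult_mat_vec[OF C AB_carrier blk_carrier] by simp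
    also have "C * (A ^\<^sub>m (L-1-l) * B) = C * A ^\<^sub>m (L-1-l) * B"
      using assoc_mult_mat[OF C Apow_carrier B] by simp
    finally show ?thesis .
  qed
  have 5: "(C *\<^sub>v (A ^\<^sub>m L *\<^sub>v x) + C *\<^sub>v (reach_mat L A B *\<^sub>v w)) $ c
      = (C *\<^sub>v (A ^\<^sub>m L *\<^sub>v x)) $ c + (C *\<^sub>v (reach_mat L A B *\<^sub>v w)) $ c"
    using c Rw by simp
  show ?thesis unfolding 1 2 3 4 using c by (simp add: vsum_index Yv_def)
qed

lemma step:
  assumes x: "x \<in> carrier_vec n" and w: "w \<in> carrier_vec (L*m)" and uu: "uu \<in> carrier_vec m"
  shows "Th *\<^sub>v iohv x w + Pm *\<^sub>v uu = iohv (A *\<^sub>v x + B *\<^sub>v blk m w 0) (shin w uu)"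
proof (rule eq_vecI)
  let ?v = "iohv x w"
  let ?x' = "A *\<^sub>v x + B *\<^sub>v blk m w 0"
  let ?g = "C *\<^sub>v (Gm *\<^sub>v ?v)"
  have g: "?g \<in> carrier_vec r" using C Gm_carrier by simp
  have e: "(L-1)*m + m = L*m" using Lpos by (cases L) auto
  have er: "(L-1)*r + r = L*r" using Lpos by (cases L) auto
  fix i assume "i < dim_vec (iohv ?x' (shin w uu))"
  then have i: "i < L*(m+r)" by simp
  have lhs: "(Th *\<^sub>v ?v + Pm *\<^sub>v uu) $ i = (Dm *\<^sub>v ?v) $ i + (Em *\<^sub>v ?g) $ i + (Pm *\<^sub>v uu) $ i"
    unfolding Th_mv[OF iohv_carrier] using i Dm_carrier Em_carrier Pm_carrier g by simp
  show "(Th *\<^sub>v ?v + Pm *\<^sub>v uu) $ i = iohv ?x' (shin w uu) $ i"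
  proof (cases "i < L*m")
    case True
    have "\<not> (L*(m+r) - r \<le> i)" using True r_le unfolding N_eq by linarith
    then have E0: "(Em *\<^sub>v ?g) $ i = 0" using Em_mv[OF g i] by simp
    have D: "(Dm *\<^sub>v ?v) $ i = (if i + m < L*m then w $ (i+m) else 0)"
      using Dm_mv[OF iohv_carrier i] True by (auto simp: iohv_u)
    show ?thesis unfolding lhs E0 D Pm_mv[OF uu i] iohv_u[OF True]
      using True e by (auto simp: shin_def)
  next
    case False
    define j where "j = i - L*m"
    have j: "j < L*r" using i False unfolding j_def N_eq by simp
    have rpos: "0 < r" using j by (cases r) auto
    define k where "k = j div r"
    define c where "c = j mod r"
    have c: "c < r" unfolding c_def using rpos by simp
    have jkc: "j = k*r + c" unfolding k_def c_def by simp
    have k: "k < L" using j jkc c by (metis add_lessD1 mult_less_cancel2)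
    have iidx: "i = L*m + j" using False unfolding j_def by simp
    have P0: "(Pm *\<^sub>v uu) $ i = 0" using Pm_mv[OF uu i] False by simp
    have "iohv ?x' (shin w uu) $ i = (Ob *\<^sub>v ?x' + Hm *\<^sub>v shin w uu) $ j"
      unfolding iidx by (rule iohv_y[OF j])
    then have rhs: "iohv ?x' (shin w uu) $ i = Yv (Suc k) c x w"
      unfolding jkc using next_Yv[OF k c x w uu] by simp
    show ?thesis
    proof (cases "Suc k < L")
      case True
      have lt: "Suc k * r + c < L * r" using idx_lt[OF True c] .
      have le: "Suc k * r \<le> (L-1) * r" using True by (intro mult_le_mono1) simp
      have D: "(Dm *\<^sub>v ?v) $ i = ?v $ (L*m + (Suc k * r + c))"
        using Dm_mv[OF iohv_carrier i] False lt unfolding iidx jkc N_eq by (simp add: algebra_simps)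
      have E0: "(Em *\<^sub>v ?g) $ i = 0"
        using Em_mv[OF g i] lt le er unfolding iidx jkc N_eq by auto
      show ?thesis unfolding lhs D E0 P0 rhs iohv_y[OF lt] ObHm_Yv[OF True c x w] by simp
    next
      case False
      then have kL: "Suc k = L" using k by simp
      have D0: "(Dm *\<^sub>v ?v) $ i = 0"
      proof -
        have "(L-1)*r + r = L*r" using er .
        have "k = L - 1" using kL by simp
        then have "\<not> i + r < L*(m+r)" unfolding iidx jkc N_eq using er by simp
        then show ?thesis using Dm_mv[OF iohv_carrier i] \<open>\<not> i < L*m\<close> by simp
      qed
      have E: "(Em *\<^sub>v ?g) $ i = ?g $ c"
      proof -
        have "k = L - 1" using kL by simp
        then have "L*(m+r) - r \<le> i" "i - (L*(m+r) - r) = c" unfolding iidx jkc N_eq using er by auto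
        then show ?thesis using Em_mv[OF g i] by simp
      qed
      have "?g $ c = Yv L c x w" unfolding Gm_iohv[OF x w] by (rule CRm_Yv[OF c x w])
      then show ?thesis unfolding lhs D0 E P0 rhs kL by simp
    qed
  qed
qed (simp add: Pi_mat_def)

end

lemma vsum_cong: "(\<And>l. l < K \<Longrightarrow> f l = g l) \<Longrightarrow> vsum d f K = vsum d g K"
  by (intro eq_vecI) (auto simp: vsum_index)

context lti_obs begin

lemma C_vsum_Yv:
  assumes c: "c < r" and x: "x \<in> carrier_vec n"
  shows "(C *\<^sub>v (A ^\<^sub>m k *\<^sub>v x + vsum n (\<lambda>l. (A ^\<^sub>m (k-1-l) * B) *\<^sub>v blk m w l) k)) $ c = Yv k c x w"
proof -
  have Ax: "A ^\<^sub>m k *\<^sub>v x \<in> carrier_vec n" using mult_mat_vec_carrier[OF Apow_carrier x] .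
  have 1: "C *\<^sub>v (A ^\<^sub>m k *\<^sub>v x + vsum n (\<lambda>l. (A ^\<^sub>m (k-1-l) * B) *\<^sub>v blk m w l) k)
     = C *\<^sub>v (A ^\<^sub>m k *\<^sub>v x) + C *\<^sub>v vsum n (\<lambda>l. (A ^\<^sub>m (k-1-l) * B) *\<^sub>v blk m w l) k"
    using mult_add_distrib_mat_vec[OF C Ax vsum_carrier] .
  have 2: "C *\<^sub>v (A ^\<^sub>m k *\<^sub>v x) = (C * A ^\<^sub>m k) *\<^sub>v x"
    using assoc_mult_mat_vec[OF C Apow_carrier x] by simp
  have 3: "C *\<^sub>v vsum n (\<lambda>l. (A ^\<^sub>m (k-1-l) * B) *\<^sub>v blk m w l) k = vsum r (\<lambda>l. C *\<^sub>v ((A ^\<^sub>m (k-1-l) * B) *\<^sub>v blk m w l)) k"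
    by (rule mult_vsum[OF C]) (rule mult_mat_vec_carrier[OF AB_carrier blk_carrier])
  have 4: "C *\<^sub>v ((A ^\<^sub>m (k-1-l) * B) *\<^sub>v blk m w l) = (C * A ^\<^sub>m (k-1-l) * B) *\<^sub>v blk m w l" for l
  proof -
    have "C *\<^sub>v ((A ^\<^sub>m (k-1-l) * B) *\<^sub>v blk m w l) = (C * (A ^\<^sub>m (k-1-l) * B)) *\<^sub>v blk m w l"
      using assoc_mult_mat_vec[OF C AB_carrier blk_carrier] by simp
    also have "C * (A ^\<^sub>m (k-1-l) * B) = C * A ^\<^sub>m (k-1-l) * B"
      using assoc_mult_mat[OF C Apow_carrier B] by simp
    finally show ?thesis .
  qed
  show ?thesis unfolding 1 2 3 4 using c by (simp add: vsum_index Yv_def)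
qed

definition uw :: "(nat \<Rightarrow> real vec) \<Rightarrow> nat \<Rightarrow> real vec" where
  "uw u t = vec (L*m) (\<lambda>i. u (t - L + i div m) $ (i mod m))"

lemma uw_carrier[simp]: "uw u t \<in> carrier_vec (L*m)" by (simp add: uw_def)

lemma blk_uw:
  assumes l: "l < L" and u: "u (t - L + l) \<in> carrier_vec m"
  shows "blk m (uw u t) l = u (t - L + l)"
proof (rule eq_vecI)
  fix d assume "d < dim_vec (u (t - L + l))"
  then have d: "d < m" using u by simp
  have "l*m + d < L*m" using idx_lt[OF l d] .
  then show "blk m (uw u t) l $ d = u (t - L + l) $ d" using d by (simp add: uw_def)
qed (use u in simp)

lemma state_carrier:
  assumes x0: "x0 \<in> carrier_vec n" and u: "\<And>t. u t \<in> carrier_vec m"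
  shows "state A B x0 u t \<in> carrier_vec n"
proof (induction t)
  case (Suc s) then show ?case using A B u by simp
qed (use x0 in simp)

lemma ioh_eq:
  assumes x0: "x0 \<in> carrier_vec n" and u: "\<And>t. u t \<in> carrier_vec m" and t: "L \<le> t"
  shows "ioh L m r u (\<lambda>t. C *\<^sub>v state A B x0 u t) t = iohv (state A B x0 u (t - L)) (uw u t)"
proof (rule eq_vecI)
  let ?xs = "state A B x0 u (t - L)"
  have xs: "?xs \<in> carrier_vec n" using state_carrier[OF x0 u] .
  fix i assume "i < dim_vec (iohv ?xs (uw u t))"
  then have i: "i < L*(m+r)" by simp
  show "ioh L m r u (\<lambda>t. C *\<^sub>v state A B x0 u t) t $ i = iohv ?xs (uw u t) $ i"
  proof (cases "i < L*m")
    case True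
    then show ?thesis using i by (simp add: ioh_def iohv_u uw_def)
  next
    case False
    define j where "j = i - L*m"
    have j: "j < L*r" using i False unfolding j_def N_eq by simp
    have rpos: "0 < r" using j by (cases r) auto
    define k where "k = j div r"
    define c where "c = j mod r"
    have c: "c < r" unfolding c_def using rpos by simp
    have jkc: "j = k*r + c" unfolding k_def c_def by simp
    have k: "k < L" using j jkc c by (metis add_lessD1 mult_less_cancel2)
    have iidx: "i = L*m + j" using False unfolding j_def by simp
    have lhs: "ioh L m r u (\<lambda>t. C *\<^sub>v state A B x0 u t) t $ i = (C *\<^sub>v state A B x0 u (t - L + k)) $ c"
      using i False unfolding ioh_def k_def c_def j_def by simp
    have "state A B x0 u (t - L + k) = A ^\<^sub>m k *\<^sub>v ?xs + vsum n (\<lambda>l. (A ^\<^sub>m (k-1-l) * B) *\<^sub>v u (t - L + l)) k"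
      by (rule state_formula[OF x0 u])
    also have "vsum n (\<lambda>l. (A ^\<^sub>m (k-1-l) * B) *\<^sub>v u (t - L + l)) k
             = vsum n (\<lambda>l. (A ^\<^sub>m (k-1-l) * B) *\<^sub>v blk m (uw u t) l) k"
      using k by (intro vsum_cong) (simp add: blk_uw[OF _ u])
    finally have "(C *\<^sub>v state A B x0 u (t - L + k)) $ c = Yv k c ?xs (uw u t)"
      using C_vsum_Yv[OF c xs] by simp
    moreover have "iohv ?xs (uw u t) $ i = Yv k c ?xs (uw u t)"
    proof -
      have "iohv ?xs (uw u t) $ i = (Ob *\<^sub>v ?xs + Hm *\<^sub>v uw u t) $ j"
        unfolding iidx by (rule iohv_y[OF j])
      then show ?thesis unfolding jkc using ObHm_Yv[OF k c xs uw_carrier] by simp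
    qed
    ultimately show ?thesis using lhs by simp
  qed
qed (simp add: ioh_def)

lemma uw_Suc:
  assumes u: "\<And>t. u t \<in> carrier_vec m" and t: "L \<le> t"
  shows "uw u (Suc t) = shin (uw u t) (u t)"
proof (rule eq_vecI)
  fix i assume "i < dim_vec (shin (uw u t) (u t))"
  then have i: "i < L*m" by (simp add: shin_def)
  have mpos: "0 < m" using i by (cases m) auto
  show "uw u (Suc t) $ i = shin (uw u t) (u t) $ i"
  proof (cases "i + m < L*m")
    case True
    have a: "uw u (Suc t) $ i = u (Suc t - L + i div m) $ (i mod m)"
      unfolding uw_def using i by (rule index_vec)
    have b1: "shin (uw u t) (u t) $ i = uw u t $ (i+m)"
      unfolding shin_def using i True by simp
    have b2: "uw u t $ (i+m) = u (t - L + (i+m) div m) $ ((i+m) mod m)"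
      unfolding uw_def using True by (rule index_vec)
    have c0: "(i+m) div m = Suc (i div m)" using mpos by simp
    have c1: "(i+m) mod m = i mod m" by simp
    have c: "t - L + Suc (i div m) = Suc t - L + i div m" using t by arith
    show ?thesis unfolding a b1 b2 c0 c1 c ..
  next
    case False
    define d where "d = i - (L-1)*m"
    have e: "(L-1)*m + m = L*m" using Lpos by (cases L) auto
    have d: "d < m" "i = (L-1)*m + d" using False i e unfolding d_def by linarith+
    have dm: "i div m = L - 1" "i mod m = d" unfolding d(2) using d(1) by simp_all
    have a: "uw u (Suc t) $ i = u (Suc t - L + i div m) $ (i mod m)"
      unfolding uw_def using i by (rule index_vec)
    have b: "shin (uw u t) (u t) $ i = u t $ (i - (L-1)*m)"
      unfolding shin_def using i False by simp
    have c: "Suc t - L + (L - 1) = t" using t Lpos by simp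
    show ?thesis unfolding a b dm c d_def ..
  qed
qed (simp add: shin_def uw_def)

theorem part1:
  assumes x0: "x0 \<in> carrier_vec n" and u: "\<And>t. u t \<in> carrier_vec m" and t: "L \<le> t"
  defines "y \<equiv> \<lambda>t. C *\<^sub>v state A B x0 u t"
  shows "ioh L m r u y (Suc t) = Th *\<^sub>v ioh L m r u y t + Pm *\<^sub>v u t"
    and "y t = (C * Gm) *\<^sub>v ioh L m r u y t"
proof -
  let ?xs = "state A B x0 u (t - L)"
  have xs: "?xs \<in> carrier_vec n" using state_carrier[OF x0 u] .
  have vt: "ioh L m r u y t = iohv ?xs (uw u t)" unfolding y_def by (rule ioh_eq[OF x0 u t])
  have "ioh L m r u y (Suc t) = iohv (state A B x0 u (Suc t - L)) (uw u (Suc t))"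
    unfolding y_def by (rule ioh_eq[OF x0 u]) (use t in simp)
  also have "state A B x0 u (Suc t - L) = A *\<^sub>v ?xs + B *\<^sub>v blk m (uw u t) 0"
  proof -
    have "Suc t - L = Suc (t - L)" using t by simp
    moreover have "blk m (uw u t) 0 = u (t - L)" using blk_uw[of 0 u t] Lpos u by simp
    ultimately show ?thesis by simp
  qed
  also have "uw u (Suc t) = shin (uw u t) (u t)" by (rule uw_Suc[OF u t])
  also have "iohv (A *\<^sub>v ?xs + B *\<^sub>v blk m (uw u t) 0) (shin (uw u t) (u t)) = Th *\<^sub>v iohv ?xs (uw u t) + Pm *\<^sub>v u t"
    by (rule step[OF xs uw_carrier u, symmetric])
  finally show "ioh L m r u y (Suc t) = Th *\<^sub>v ioh L m r u y t + Pm *\<^sub>v u t" unfolding vt .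
  have "(C * Gm) *\<^sub>v ioh L m r u y t = C *\<^sub>v (Gm *\<^sub>v iohv ?xs (uw u t))"
    unfolding vt using C Gm_carrier by (intro assoc_mult_mat_vec) auto
  also have "\<dots> = C *\<^sub>v (A ^\<^sub>m L *\<^sub>v ?xs + reach_mat L A B *\<^sub>v uw u t)"
    unfolding Gm_iohv[OF xs uw_carrier] ..
  also have "reach_mat L A B *\<^sub>v uw u t = vsum n (\<lambda>l. (A ^\<^sub>m (L-1-l) * B) *\<^sub>v u (t - L + l)) L"
    unfolding reach_vsum[OF uw_carrier] by (intro vsum_cong) (simp add: blk_uw[OF _ u])
  also have "A ^\<^sub>m L *\<^sub>v ?xs + \<dots> = state A B x0 u (t - L + L)"
    by (rule state_formula[OF x0 u, symmetric])
  also have "t - L + L = t" using t by simp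
  finally show "y t = (C * Gm) *\<^sub>v ioh L m r u y t" unfolding y_def ..
qed

end

context lti_obs begin

abbreviation "Pmat \<equiv> P_mat L A B C"

definition Wset :: "real vec set" where
  "Wset = {iohv x w | x w. x \<in> carrier_vec n \<and> w \<in> carrier_vec (L*m)}"

lemma iohv_add:
  assumes "x \<in> carrier_vec n" "x' \<in> carrier_vec n" "w \<in> carrier_vec (L*m)" "w' \<in> carrier_vec (L*m)"
  shows "iohv x w + iohv x' w' = iohv (x + x') (w + w')"
proof (rule eq_vecI)
  fix i assume "i < dim_vec (iohv (x + x') (w + w'))"
  then have i: "i < L*(m+r)" by simp
  have o: "Ob *\<^sub>v (x + x') = Ob *\<^sub>v x + Ob *\<^sub>v x'"
    using assms by (intro mult_add_distrib_mat_vec[OF Ob_carrier]) auto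
  have h: "Hm *\<^sub>v (w + w') = Hm *\<^sub>v w + Hm *\<^sub>v w'"
    using assms by (intro mult_add_distrib_mat_vec[OF Hm_carrier]) auto
  show "(iohv x w + iohv x' w') $ i = iohv (x + x') (w + w') $ i"
    using i assms Ob_carrier Hm_carrier unfolding iohv_def o h N_eq by simp
qed simp

lemma iohv_zero: "iohv (0\<^sub>v n) (0\<^sub>v (L*m)) = 0\<^sub>v (L*(m+r))"
proof -
  have "Ob *\<^sub>v 0\<^sub>v n = 0\<^sub>v (L*r)" "Hm *\<^sub>v 0\<^sub>v (L*m) = 0\<^sub>v (L*r)"
    using Ob_carrier Hm_carrier by auto
  then show ?thesis by (intro eq_vecI) (auto simp: iohv_def N_eq)
qed

lemma Pm_dims[simp]: "dim_row Pm = L*(m+r)" "dim_col Pm = m" by (auto simp: Pi_mat_def)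

lemma Pm_zero: "Pm *\<^sub>v 0\<^sub>v m = 0\<^sub>v (L*(m+r))"
  using Pm_carrier by (intro eq_vecI) auto

lemma Th_zero: "Th *\<^sub>v 0\<^sub>v (L*(m+r)) = 0\<^sub>v (L*(m+r))"
  using Th_carrier by (intro eq_vecI) auto

lemma zero_W: "0\<^sub>v (L*(m+r)) \<in> Wset"
  unfolding Wset_def mem_Collect_eq
  by (rule exI[of _ "0\<^sub>v n"], rule exI[of _ "0\<^sub>v (L*m)"]) (simp add: iohv_zero)

lemma add_W: "v \<in> Wset \<Longrightarrow> v' \<in> Wset \<Longrightarrow> v + v' \<in> Wset"
  unfolding Wset_def using iohv_add by fastforce

lemma W_carrier: "v \<in> Wset \<Longrightarrow> v \<in> carrier_vec (L*(m+r))"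
  unfolding Wset_def by auto

lemma Th_W:
  assumes "v \<in> Wset" shows "Th *\<^sub>v v \<in> Wset"
proof -
  obtain x w where v: "v = iohv x w" and x: "x \<in> carrier_vec n" and w: "w \<in> carrier_vec (L*m)"
    using assms unfolding Wset_def by blast
  have "Th *\<^sub>v v = Th *\<^sub>v v + Pm *\<^sub>v 0\<^sub>v m"
    unfolding Pm_zero using Th_carrier v by simp
  also have "\<dots> = iohv (A *\<^sub>v x + B *\<^sub>v blk m w 0) (shin w (0\<^sub>v m))"
    unfolding v by (rule step[OF x w]) simp
  finally have e: "Th *\<^sub>v v = iohv (A *\<^sub>v x + B *\<^sub>v blk m w 0) (shin w (0\<^sub>v m))" .
  have c: "A *\<^sub>v x + B *\<^sub>v blk m w 0 \<in> carrier_vec n" using A B x by simp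
  show ?thesis unfolding e Wset_def using c shin_carrier by blast
qed

lemma Pm_W:
  assumes uu: "uu \<in> carrier_vec m" shows "Pm *\<^sub>v uu \<in> Wset"
proof -
  have "Pm *\<^sub>v uu = Th *\<^sub>v iohv (0\<^sub>v n) (0\<^sub>v (L*m)) + Pm *\<^sub>v uu"
    unfolding iohv_zero Th_zero using Pm_carrier uu by simp
  also have "\<dots> = iohv (A *\<^sub>v 0\<^sub>v n + B *\<^sub>v blk m (0\<^sub>v (L*m)) 0) (shin (0\<^sub>v (L*m)) uu)"
    by (rule step[OF _ _ uu]) auto
  finally have e: "Pm *\<^sub>v uu = iohv (A *\<^sub>v 0\<^sub>v n + B *\<^sub>v blk m (0\<^sub>v (L*m)) 0) (shin (0\<^sub>v (L*m)) uu)" .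
  have c: "A *\<^sub>v 0\<^sub>v n + B *\<^sub>v blk m (0\<^sub>v (L*m)) 0 \<in> carrier_vec n" using A B by simp
  show ?thesis unfolding e Wset_def using c shin_carrier by blast
qed

lemma Th_pow_Suc: "Th ^\<^sub>m Suc q * Pm = Th * (Th ^\<^sub>m q * Pm)"
proof -
  have e: "Th ^\<^sub>m Suc q = Th * Th ^\<^sub>m q"
    unfolding pow_mat.simps(2) using pow_mat_commute[OF Th_carrier, of q] by (rule sym)
  show ?thesis unfolding e
    by (rule assoc_mult_mat[OF Th_carrier pow_carrier_mat[OF Th_carrier] Pm_carrier])
qed

lemma ThPm_carrier: "Th ^\<^sub>m q * Pm \<in> carrier_mat (L*(m+r)) m"
  using mult_carrier_mat[OF pow_carrier_mat[OF Th_carrier] Pm_carrier] .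

lemma ThPm_mv_Suc:
  assumes uu: "uu \<in> carrier_vec m"
  shows "(Th ^\<^sub>m Suc q * Pm) *\<^sub>v uu = Th *\<^sub>v ((Th ^\<^sub>m q * Pm) *\<^sub>v uu)"
  unfolding Th_pow_Suc using Th_carrier ThPm_carrier uu by (rule assoc_mult_mat_vec)

lemma ThPm_W:
  assumes uu: "uu \<in> carrier_vec m" shows "(Th ^\<^sub>m q * Pm) *\<^sub>v uu \<in> Wset"
proof (induction q)
  case 0
  have "(Th ^\<^sub>m 0 * Pm) = Pm" using Th_carrier Pm_carrier by simp
  then show ?case using Pm_W[OF uu] by simp
next
  case (Suc q)
  then show ?case unfolding ThPm_mv_Suc[OF uu] by (rule Th_W)
qed

lemma vsum_closed:
  assumes zero: "0\<^sub>v d \<in> S" and add: "\<And>a b. a \<in> S \<Longrightarrow> b \<in> S \<Longrightarrow> a + b \<in> S"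
    and f: "\<And>k. k < K \<Longrightarrow> f k \<in> S" and car: "\<And>k. k < K \<Longrightarrow> f k \<in> carrier_vec d"
  shows "vsum d f K \<in> S"
  using f car
proof (induction K)
  case 0 then show ?case using zero by (simp add: vsum_0)
next
  case (Suc K)
  then show ?case using add by (simp add: vsum_Suc)
qed

lemma P_carrier: "Pmat \<in> carrier_mat (L*(m+r)) (L*(m+r)*m)"
  by (simp add: P_mat_def Let_def)

lemma P_mv:
  assumes z: "z \<in> carrier_vec (L*(m+r)*m)"
  shows "Pmat *\<^sub>v z = vsum (L*(m+r)) (\<lambda>k. (Th ^\<^sub>m (L*(m+r)-1-k) * Pm) *\<^sub>v blk m z k) (L*(m+r))"
proof (rule eq_vecI)
  let ?N = "L*(m+r)"
  fix i assume "i < dim_vec (vsum ?N (\<lambda>k. (Th ^\<^sub>m (?N-1-k) * Pm) *\<^sub>v blk m z k) ?N)"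
  then have i: "i < ?N" by simp
  have "(Pmat *\<^sub>v z) $ i = (\<Sum>j<?N*m. Pmat $$ (i, j) * z $ j)"
    using P_carrier i z by (subst mv_entry) auto
  also have "\<dots> = (\<Sum>k<?N. \<Sum>d<m. Pmat $$ (i, k*m+d) * z $ (k*m+d))"
    by (rule sum_blocks)
  also have "\<dots> = (\<Sum>k<?N. \<Sum>d<m. (Th ^\<^sub>m (?N-1-k) * Pm) $$ (i, d) * z $ (k*m+d))"
  proof (intro sum.cong refl)
    fix k d assume k: "k \<in> {..<?N}" and d: "d \<in> {..<m}"
    have kd: "k*m+d < ?N*m" using idx_lt[of k ?N d m] k d by simp
    show "Pmat $$ (i, k*m+d) * z $ (k*m+d) = (Th ^\<^sub>m (?N-1-k) * Pm) $$ (i, d) * z $ (k*m+d)"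
      using kd i d by (simp add: P_mat_def Let_def divmod_blk)
  qed
  also have "\<dots> = (\<Sum>k<?N. ((Th ^\<^sub>m (?N-1-k) * Pm) *\<^sub>v blk m z k) $ i)"
    using i ThPm_carrier Th_carrier by (intro sum.cong refl) (subst mv_entry, auto)
  finally show "(Pmat *\<^sub>v z) $ i = vsum ?N (\<lambda>k. (Th ^\<^sub>m (?N-1-k) * Pm) *\<^sub>v blk m z k) ?N $ i"
    using i by (simp add: vsum_index)
qed (use P_carrier in simp)

lemma img_P_W: "mat_image Pmat \<subseteq> Wset"
proof
  fix v assume "v \<in> mat_image Pmat"
  then obtain z where v: "v = Pmat *\<^sub>v z" and z: "z \<in> carrier_vec (dim_col Pmat)"
    unfolding mat_image_def by blast
  have z': "z \<in> carrier_vec (L*(m+r)*m)" using z P_carrier by simp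
  show "v \<in> Wset" unfolding v P_mv[OF z']
    by (rule vsum_closed[OF zero_W add_W]) (auto intro: ThPm_W mult_mat_vec_carrier[OF ThPm_carrier])
qed

end

lemma img_intro: "z \<in> carrier_vec (dim_col M) \<Longrightarrow> M *\<^sub>v z \<in> mat_image M"
  unfolding mat_image_def by blast

lemma mult_zero_vec_gen: "(M::real mat) \<in> carrier_mat p q \<Longrightarrow> M *\<^sub>v 0\<^sub>v q = 0\<^sub>v p"
  by (intro eq_vecI) auto

context lti_obs begin

lemma img_zero: "0\<^sub>v (L*(m+r)) \<in> mat_image Pmat"
proof -
  have "Pmat *\<^sub>v 0\<^sub>v (L*(m+r)*m) = 0\<^sub>v (L*(m+r))" using P_carrier by (intro eq_vecI) auto
  moreover have "Pmat *\<^sub>v 0\<^sub>v (L*(m+r)*m) \<in> mat_image Pmat" using P_carrier by (intro img_intro) simp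
  ultimately show ?thesis by simp
qed

lemma img_add: "a \<in> mat_image Pmat \<Longrightarrow> b \<in> mat_image Pmat \<Longrightarrow> a + b \<in> mat_image Pmat"
proof -
  assume "a \<in> mat_image Pmat" "b \<in> mat_image Pmat"
  then obtain z z' where a: "a = Pmat *\<^sub>v z" and z: "z \<in> carrier_vec (L*(m+r)*m)"
    and b: "b = Pmat *\<^sub>v z'" and z': "z' \<in> carrier_vec (L*(m+r)*m)"
    unfolding mat_image_def using P_carrier by auto
  have "a + b = Pmat *\<^sub>v (z + z')"
    unfolding a b using P_carrier z z' by (intro mult_add_distrib_mat_vec[symmetric]) auto
  moreover have "Pmat *\<^sub>v (z + z') \<in> mat_image Pmat" by (rule img_intro) (use P_carrier z z' in simp)
  ultimately show ?thesis by simp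
qed

lemma ThPm_img:
  assumes q: "q < L*(m+r)" and uu: "uu \<in> carrier_vec m"
  shows "(Th ^\<^sub>m q * Pm) *\<^sub>v uu \<in> mat_image Pmat"
proof -
  let ?N = "L*(m+r)"
  define z where "z = vec (?N*m) (\<lambda>i. if i div m = ?N-1-q then uu $ (i mod m) else 0)"
  have z: "z \<in> carrier_vec (?N*m)" unfolding z_def by simp
  have bz: "blk m z k = (if k = ?N-1-q then uu else 0\<^sub>v m)" if k: "k < ?N" for k
  proof (rule eq_vecI)
    fix d assume "d < dim_vec (if k = ?N-1-q then uu else 0\<^sub>v m)"
    then have d: "d < m" using uu by (auto split: if_splits)
    have "k*m+d < ?N*m" using idx_lt[OF k d] .
    then show "blk m z k $ d = (if k = ?N-1-q then uu else 0\<^sub>v m) $ d"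
      using d by (simp add: z_def divmod_blk)
  qed (use uu in auto)
  have "Pmat *\<^sub>v z = (Th ^\<^sub>m q * Pm) *\<^sub>v uu"
  proof (rule eq_vecI)
    fix i assume "i < dim_vec ((Th ^\<^sub>m q * Pm) *\<^sub>v uu)"
    then have i: "i < ?N" using ThPm_carrier[of q] Th_carrier by simp
    have "(Pmat *\<^sub>v z) $ i = (\<Sum>k<?N. ((Th ^\<^sub>m (?N-1-k) * Pm) *\<^sub>v blk m z k) $ i)"
      unfolding P_mv[OF z] using i by (simp add: vsum_index)
    also have "\<dots> = (\<Sum>k<?N. if k = ?N-1-q then ((Th ^\<^sub>m q * Pm) *\<^sub>v uu) $ i else 0)"
    proof (intro sum.cong refl)
      fix k assume k: "k \<in> {..<?N}"
      show "((Th ^\<^sub>m (?N-1-k) * Pm) *\<^sub>v blk m z k) $ i = (if k = ?N-1-q then ((Th ^\<^sub>m q * Pm) *\<^sub>v uu) $ i else 0)"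
      proof (cases "k = ?N-1-q")
        case True
        then have "?N-1-k = q" using q by simp
        then show ?thesis using True bz k by simp
      next
        case False
        then show ?thesis using bz k i mult_zero_vec_gen[OF ThPm_carrier[of "?N-1-k"]] by simp
      qed
    qed
    also have "\<dots> = ((Th ^\<^sub>m q * Pm) *\<^sub>v uu) $ i"
      using q by (subst sum.delta) auto
    finally show "(Pmat *\<^sub>v z) $ i = ((Th ^\<^sub>m q * Pm) *\<^sub>v uu) $ i" .
  qed (use P_carrier ThPm_carrier[of q] Th_carrier in simp)
  moreover have "Pmat *\<^sub>v z \<in> mat_image Pmat" by (rule img_intro) (use P_carrier z in simp)
  ultimately show ?thesis by simp
qed

end

context lti_obs begin

lemma W_img:
  assumes surj: "\<And>x. x \<in> carrier_vec n \<Longrightarrow> \<exists>z\<in>carrier_vec (n*m). reach_mat n A B *\<^sub>v z = x"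
    and bound: "L + n \<le> L*(m+r)"
  shows "Wset \<subseteq> mat_image Pmat"
proof
  let ?N = "L*(m+r)"
  fix v assume "v \<in> Wset"
  then obtain x w where v: "v = iohv x w" and x: "x \<in> carrier_vec n" and w: "w \<in> carrier_vec (L*m)"
    unfolding Wset_def by blast
  obtain z where z: "z \<in> carrier_vec (n*m)" and zx: "reach_mat n A B *\<^sub>v z = x"
    using surj[OF x] by blast
  define s where "s t = (if t < L then 0\<^sub>v m else if t < L + n then blk m z (t - L) else blk m w (t - L - n))" for t
  have s: "s t \<in> carrier_vec m" for t unfolding s_def by simp
  let ?x0 = "0\<^sub>v n :: real vec"
  have x0: "?x0 \<in> carrier_vec n" by simp
  let ?y = "\<lambda>t. C *\<^sub>v state A B ?x0 s t"
  let ?v = "ioh L m r s ?y"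
  have st0: "state A B ?x0 s t = 0\<^sub>v n" if "t \<le> L" for t
    using that
  proof (induction t)
    case (Suc t)
    then have "s t = 0\<^sub>v m" unfolding s_def by simp
    then show ?case using Suc mult_zero_vec_gen[OF A] mult_zero_vec_gen[OF B] by simp
  qed simp
  have uwL: "uw s L = 0\<^sub>v (L*m)"
  proof (rule eq_vecI)
    fix i assume "i < dim_vec (0\<^sub>v (L*m) :: real vec)"
    then have i: "i < L*m" by simp
    then have "i div m < L" by (simp add: less_mult_imp_div_less)
    moreover have "i mod m < m" using i by (cases m) auto
    ultimately show "uw s L $ i = 0\<^sub>v (L*m) $ i" using i by (simp add: uw_def s_def)
  qed simp
  let ?f = "\<lambda>j q. (Th ^\<^sub>m q * Pm) *\<^sub>v s (L + j - 1 - q)"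
  have fc: "?f j q \<in> carrier_vec ?N" for j q using mult_mat_vec_carrier[OF ThPm_carrier s] .
  have rec: "?v (L + j) = vsum ?N (?f j) j" for j
  proof (induction j)
    case 0
    have "?v (L + 0) = iohv (state A B ?x0 s (L + 0 - L)) (uw s (L + 0))"
      by (rule ioh_eq[OF x0 s]) simp
    also have "\<dots> = 0\<^sub>v ?N" using st0[of 0] uwL iohv_zero by simp
    finally show ?case by (simp add: vsum_0)
  next
    case (Suc j)
    have "?v (L + Suc j) = ?v (Suc (L + j))" by simp
    also have "\<dots> = Th *\<^sub>v ?v (L + j) + Pm *\<^sub>v s (L + j)"
      by (rule part1(1)[OF x0 s]) simp
    also have "Th *\<^sub>v ?v (L + j) = vsum ?N (\<lambda>q. Th *\<^sub>v ?f j q) j"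
      unfolding Suc.IH by (rule mult_vsum[OF Th_carrier fc])
    also have "\<dots> = vsum ?N (\<lambda>q. ?f (Suc j) (Suc q)) j"
    proof (rule vsum_cong)
      fix q assume "q < j"
      have "Th *\<^sub>v ?f j q = (Th ^\<^sub>m Suc q * Pm) *\<^sub>v s (L + j - 1 - q)"
        using ThPm_mv_Suc[OF s] by simp
      moreover have "L + Suc j - 1 - Suc q = L + j - 1 - q" by simp
      ultimately show "Th *\<^sub>v ?f j q = ?f (Suc j) (Suc q)" by simp
    qed
    also have "Pm *\<^sub>v s (L + j) = ?f (Suc j) 0"
      using Th_carrier Pm_carrier by simp
    finally have "?v (L + Suc j) = vsum ?N (\<lambda>q. ?f (Suc j) (Suc q)) j + ?f (Suc j) 0" .
    also have "\<dots> = ?f (Suc j) 0 + vsum ?N (\<lambda>q. ?f (Suc j) (Suc q)) j"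
      by (rule comm_add_vec[OF vsum_carrier fc])
    also have "\<dots> = vsum ?N (?f (Suc j)) (Suc j)"
      by (rule vsum_Suc_shift[symmetric]) (rule fc)
    finally show ?case .
  qed
  have inimg: "?v (L + (L + n)) \<in> mat_image Pmat"
    unfolding rec
  proof (rule vsum_closed[OF img_zero img_add])
    fix k assume "k < L + n"
    then show "?f (L + n) k \<in> mat_image Pmat" using bound by (intro ThPm_img[OF _ s]) simp
  next
    fix k show "?f (L + n) k \<in> carrier_vec ?N" by (rule fc)
  qed
  have "?v (L + (L + n)) = iohv (state A B ?x0 s (L + (L + n) - L)) (uw s (L + (L + n)))"
    by (rule ioh_eq[OF x0 s]) simp
  also have "state A B ?x0 s (L + (L + n) - L) = x"
  proof -
    have "state A B ?x0 s (L + n) = A ^\<^sub>m n *\<^sub>v state A B ?x0 s L + vsum n (\<lambda>l. (A ^\<^sub>m (n-1-l) * B) *\<^sub>v s (L + l)) n"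
      by (rule state_formula[OF x0 s])
    also have "A ^\<^sub>m n *\<^sub>v state A B ?x0 s L = 0\<^sub>v n" using st0[of L] mult_zero_vec_gen[OF Apow_carrier] by simp
    also have "vsum n (\<lambda>l. (A ^\<^sub>m (n-1-l) * B) *\<^sub>v s (L + l)) n = vsum n (\<lambda>l. (A ^\<^sub>m (n-1-l) * B) *\<^sub>v blk m z l) n"
      by (rule vsum_cong) (simp add: s_def)
    also have "\<dots> = x" using reach_vsum[OF z] zx by simp
    finally show ?thesis using x by simp
  qed
  also have "uw s (L + (L + n)) = w"
  proof (rule eq_vecI)
    fix i assume "i < dim_vec w"
    then have i: "i < L*m" using w by simp
    have "i div m < L" using i by (simp add: less_mult_imp_div_less)
    then have "uw s (L + (L + n)) $ i = blk m w (i div m) $ (i mod m)"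
      using i by (simp add: uw_def s_def)
    also have "\<dots> = w $ i"
    proof -
      have "0 < m" using i by (cases m) auto
      then show ?thesis by simp
    qed
    finally show "uw s (L + (L + n)) $ i = w $ i" .
  qed (use w in simp)
  finally show "v \<in> mat_image Pmat" using inimg v by simp
qed

end

context lti_obs begin

definition Mm :: "real mat" where
  "Mm = mat (L*(m+r)) (L*m+n) (\<lambda>(i,j). if i < L*m then (if j = i then 1 else 0)
          else if j < L*m then Hm $$ (i - L*m, j) else Ob $$ (i - L*m, j - L*m))"

lemma Mm_carrier: "Mm \<in> carrier_mat (L*(m+r)) (L*m+n)" by (simp add: Mm_def)

lemma Mm_mv:
  assumes z: "z \<in> carrier_vec (L*m+n)"
  shows "Mm *\<^sub>v z = iohv (vec n (\<lambda>k. z $ (L*m+k))) (vec (L*m) (\<lambda>k. z $ k))"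
proof (rule eq_vecI)
  let ?x = "vec n (\<lambda>k. z $ (L*m+k))"
  let ?w = "vec (L*m) (\<lambda>k. z $ k)"
  fix i assume "i < dim_vec (iohv ?x ?w)"
  then have i: "i < L*(m+r)" by simp
  have "(Mm *\<^sub>v z) $ i = (\<Sum>j<L*m+n. Mm $$ (i,j) * z $ j)"
    using Mm_carrier z i by (subst mv_entry) auto
  also have "\<dots> = (\<Sum>j<L*m. Mm $$ (i,j) * z $ j) + (\<Sum>k<n. Mm $$ (i,L*m+k) * z $ (L*m+k))"
    by (rule sum_lessThan_add)
  finally have s: "(Mm *\<^sub>v z) $ i = (\<Sum>j<L*m. Mm $$ (i,j) * z $ j) + (\<Sum>k<n. Mm $$ (i,L*m+k) * z $ (L*m+k))" .
  show "(Mm *\<^sub>v z) $ i = iohv ?x ?w $ i"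
  proof (cases "i < L*m")
    case True
    have 1: "(\<Sum>j<L*m. Mm $$ (i,j) * z $ j) = (\<Sum>j<L*m. (if j = i then 1 else 0) * z $ j)"
      using True i by (intro sum.cong refl) (simp add: Mm_def)
    have 2: "(\<Sum>k<n. Mm $$ (i,L*m+k) * z $ (L*m+k)) = 0"
      using True i by (intro sum.neutral) (simp add: Mm_def)
    show ?thesis unfolding s 1 2 sum_delta_at iohv_u[OF True] using True by simp
  next
    case False
    define j where "j = i - L*m"
    have j: "j < L*r" using i False unfolding j_def N_eq by simp
    have iidx: "i = L*m + j" using False unfolding j_def by simp
    have 1: "(\<Sum>l<L*m. Mm $$ (i,l) * z $ l) = (Hm *\<^sub>v ?w) $ j"
    proof -
      have "(Hm *\<^sub>v ?w) $ j = (\<Sum>l<L*m. Hm $$ (j,l) * ?w $ l)"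
        using Hm_carrier j by (subst mv_entry) auto
      also have "\<dots> = (\<Sum>l<L*m. Mm $$ (i,l) * z $ l)"
        using i iidx by (intro sum.cong refl) (simp add: Mm_def)
      finally show ?thesis ..
    qed
    have 2: "(\<Sum>k<n. Mm $$ (i,L*m+k) * z $ (L*m+k)) = (Ob *\<^sub>v ?x) $ j"
    proof -
      have "(Ob *\<^sub>v ?x) $ j = (\<Sum>k<n. Ob $$ (j,k) * ?x $ k)"
        using Ob_carrier j by (subst mv_entry) auto
      also have "\<dots> = (\<Sum>k<n. Mm $$ (i,L*m+k) * z $ (L*m+k))"
        using i iidx by (intro sum.cong refl) (simp add: Mm_def)
      finally show ?thesis ..
    qed
    have "iohv ?x ?w $ i = (Ob *\<^sub>v ?x + Hm *\<^sub>v ?w) $ j" unfolding iidx by (rule iohv_y[OF j])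
    then show ?thesis unfolding s 1 2 using j Ob_carrier Hm_carrier by simp
  qed
qed (simp add: Mm_def)

lemma Mm_img: "mat_image Mm = Wset"
proof
  show "mat_image Mm \<subseteq> Wset"
  proof
    fix v assume "v \<in> mat_image Mm"
    then obtain z where v: "v = Mm *\<^sub>v z" and z: "z \<in> carrier_vec (L*m+n)"
      unfolding mat_image_def using Mm_carrier by auto
    show "v \<in> Wset" unfolding v Mm_mv[OF z] Wset_def mem_Collect_eq
      by (rule exI, rule exI, rule conjI[OF refl]) simp
  qed
  show "Wset \<subseteq> mat_image Mm"
  proof
    fix v assume "v \<in> Wset"
    then obtain x w where v: "v = iohv x w" and x: "x \<in> carrier_vec n" and w: "w \<in> carrier_vec (L*m)"
      unfolding Wset_def by blast
    define z where "z = vec (L*m+n) (\<lambda>j. if j < L*m then w $ j else x $ (j - L*m))"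
    have z: "z \<in> carrier_vec (L*m+n)" unfolding z_def by simp
    have "vec n (\<lambda>k. z $ (L*m+k)) = x" using x by (intro eq_vecI) (auto simp: z_def)
    moreover have "vec (L*m) (\<lambda>k. z $ k) = w" using w by (intro eq_vecI) (auto simp: z_def)
    ultimately have "Mm *\<^sub>v z = v" unfolding v Mm_mv[OF z] by simp
    moreover have "Mm *\<^sub>v z \<in> mat_image Mm" by (rule img_intro) (use Mm_carrier z in simp)
    ultimately show "v \<in> mat_image Mm" by simp
  qed
qed

lemma Mm_inj:
  assumes z: "z \<in> carrier_vec (L*m+n)" and Mz: "Mm *\<^sub>v z = 0\<^sub>v (L*(m+r))"
  shows "z = 0\<^sub>v (L*m+n)"
proof -
  let ?x = "vec n (\<lambda>k. z $ (L*m+k))"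
  let ?w = "vec (L*m) (\<lambda>k. z $ k)"
  have io: "iohv ?x ?w = 0\<^sub>v (L*(m+r))" using Mz Mm_mv[OF z] by simp
  have wz: "?w = 0\<^sub>v (L*m)"
  proof (rule eq_vecI)
    fix k assume "k < dim_vec (0\<^sub>v (L*m) :: real vec)"
    then have k: "k < L*m" by simp
    have "iohv ?x ?w $ k = 0" using io k unfolding N_eq by simp
    then show "?w $ k = 0\<^sub>v (L*m) $ k" using k iohv_u[OF k] by simp
  qed simp
  have "Ob *\<^sub>v ?x = 0\<^sub>v (L*r)"
  proof (rule eq_vecI)
    fix j assume "j < dim_vec (0\<^sub>v (L*r) :: real vec)"
    then have j: "j < L*r" by simp
    have "iohv ?x ?w $ (L*m+j) = 0" using io j unfolding N_eq by simp
    then have "(Ob *\<^sub>v ?x + Hm *\<^sub>v ?w) $ j = 0" using iohv_y[OF j] by simp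
    moreover have "Hm *\<^sub>v ?w = 0\<^sub>v (L*r)" unfolding wz by (rule mult_zero_vec_gen[OF Hm_carrier])
    ultimately show "(Ob *\<^sub>v ?x) $ j = 0\<^sub>v (L*r) $ j" using j Ob_carrier by simp
  qed (use Ob_carrier in simp)
  then have xz: "?x = 0\<^sub>v n" using Ob_inj by simp
  show ?thesis
  proof (rule eq_vecI)
    fix j assume "j < dim_vec (0\<^sub>v (L*m+n) :: real vec)"
    then have j: "j < L*m+n" by simp
    show "z $ j = 0\<^sub>v (L*m+n) $ j"
    proof (cases "j < L*m")
      case True
      then have "?w $ j = 0" using wz by simp
      then show ?thesis using True j by simp
    next
      case False
      then have "?x $ (j - L*m) = 0" using xz j by simp
      moreover have "L*m + (j - L*m) = j" using False by simp
      ultimately show ?thesis using False j by simp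
    qed
  qed (use z in simp)
qed

lemma col_space_img:
  assumes M: "(M::real mat) \<in> carrier_mat p q"
  shows "vec_space.col_space p M = mat_image M"
proof -
  interpret vec_space "TYPE(real)" p .
  show ?thesis unfolding col_space_eq[OF M] mat_image_def using M by auto
qed

lemma rank_eq_img:
  assumes M: "(M::real mat) \<in> carrier_mat p q" and M': "(M'::real mat) \<in> carrier_mat p q'"
    and img: "mat_image M = mat_image M'"
  shows "vec_space.rank p M = vec_space.rank p M'"
proof -
  interpret vec_space "TYPE(real)" p .
  have "span (set (cols M)) = span (set (cols M'))"
    using col_space_img[OF M] col_space_img[OF M'] img unfolding col_space_def by simp
  then show ?thesis unfolding rank_def by simp
qed

lemma rank_P:
  assumes img: "mat_image Pmat = Wset"
  shows "mat_rank Pmat = L*m + n"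
proof -
  have "vec_space.rank (L*(m+r)) Mm = L*m+n"
    by (rule rank_inj[OF Mm_carrier]) (rule Mm_inj)
  moreover have "vec_space.rank (L*(m+r)) Pmat = vec_space.rank (L*(m+r)) Mm"
    by (rule rank_eq_img[OF P_carrier Mm_carrier]) (simp add: img Mm_img)
  ultimately show ?thesis unfolding mat_rank_def using P_carrier by simp
qed

end

lemma state_carrier_gen:
  assumes A: "A \<in> carrier_mat n n" and B: "B \<in> carrier_mat n m"
    and x0: "x0 \<in> carrier_vec n" and u: "\<And>t. u t \<in> carrier_vec m"
  shows "state A B x0 u t \<in> carrier_vec n"
proof (induction t)
  case (Suc s) then show ?case using A B u by simp
qed (use x0 in simp)

theorem lemma1:
  fixes n m r L :: nat and A B C :: "real mat"
    and x0 :: "real vec" and u :: "nat \<Rightarrow> real vec"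
  assumes A: "A \<in> carrier_mat n n" and B: "B \<in> carrier_mat n m" and C: "C \<in> carrier_mat r n"
    and ctrb: "mat_rank (reach_mat n A B) = n"
    and obsv: "mat_rank (obs_mat n A C) = n"
    and schur: "schur_mat A"
    and rankL: "mat_rank (obs_mat L A C) = n"
    and x0: "x0 \<in> carrier_vec n"
    and u: "\<And>t. u t \<in> carrier_vec m"
  defines "y \<equiv> \<lambda>t. C *\<^sub>v state A B x0 u t"
  defines "v \<equiv> ioh L m r u y"
  shows "(\<forall>t\<ge>L. v (Suc t) = Theta_mat L A B C *\<^sub>v v t + Pi_mat L m r *\<^sub>v u t
              \<and> y t = (C * Gamma_mat L A B C) *\<^sub>v v t)
       \<and> (\<forall>t\<ge>L. v t \<in> mat_image (P_mat L A B C))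
       \<and> mat_rank (P_mat L A B C) = L * m + n"
proof -
  interpret lti n m r L A B C using A B C by unfold_locales
  have rkO: "vec_space.rank (L*r) (obs_mat L A C) = n"
    using rankL Ob_carrier unfolding mat_rank_def by simp
  have Oinj: "\<And>x. x \<in> carrier_vec n \<Longrightarrow> obs_mat L A C *\<^sub>v x = 0\<^sub>v (L*r) \<Longrightarrow> x = 0\<^sub>v n"
    using rank_full_col_inj[OF Ob_carrier rkO] by blast
  have nle: "n \<le> L*r" using rank_le_rows[OF Ob_carrier] rkO by simp
  show ?thesis
  proof (cases "L = 0")
    case False
    interpret lti_obs n m r L A B C
      using Oinj False by unfold_locales auto
    have P1: "v (Suc t) = Th *\<^sub>v v t + Pm *\<^sub>v u t \<and> y t = (C * Gm) *\<^sub>v v t" if t: "L \<le> t" for t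
      using part1[OF x0 u t] unfolding v_def y_def by simp
    have rkR: "vec_space.rank n (reach_mat n A B) = n"
      using ctrb reach_carrier[of n] unfolding mat_rank_def by simp
    have surj: "\<And>x. x \<in> carrier_vec n \<Longrightarrow> \<exists>z\<in>carrier_vec (n*m). reach_mat n A B *\<^sub>v z = x"
      using rank_full_row_surj[OF reach_carrier rkR] by blast
    have WP: "Wset \<subseteq> mat_image Pmat"
    proof (cases "L*(m+r) = 0")
      case True
      show ?thesis
      proof
        fix w assume "w \<in> Wset"
        then have "w \<in> carrier_vec (L*(m+r))" by (rule W_carrier)
        then have "w = 0\<^sub>v (L*(m+r))" using True by auto
        then show "w \<in> mat_image Pmat" using img_zero by simp
      qed
    next
      case N0: False
      have "L + n \<le> L*(m+r)"
      proof (cases "m = 0")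
        case True
        have "vec_space.rank n (reach_mat n A B) \<le> n*m"
        proof -
          interpret vec_space "TYPE(real)" n .
          show ?thesis using rank_le_nc[OF reach_carrier] .
        qed
        then have "n = 0" using rkR True by simp
        moreover have "0 < r" using N0 True by auto
        ultimately show ?thesis using True by simp
      next
        case False
        then have h1: "L \<le> L*m" by simp
        have h2: "L*(m+r) = L*m + L*r" by (simp add: algebra_simps)
        show ?thesis using h1 h2 nle by linarith
      qed
      then show ?thesis using W_img surj by blast
    qed
    have imgW: "mat_image Pmat = Wset" using WP img_P_W by blast
    have vW: "v t \<in> Wset" if t: "L \<le> t" for t
    proof -
      have "v t = iohv (state A B x0 u (t - L)) (uw u t)"
        unfolding v_def y_def by (rule ioh_eq[OF x0 u t])
      moreover have "state A B x0 u (t - L) \<in> carrier_vec n" by (rule state_carrier[OF x0 u])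
      ultimately show ?thesis unfolding Wset_def using uw_carrier by blast
    qed
    show ?thesis using P1 vW imgW rank_P[OF imgW] by auto
  next
    case True
    then have n0: "n = 0" using nle by simp
    have vdim: "dim_vec (v t) = 0" for t unfolding v_def ioh_def True by simp
    have c1: "v (Suc t) = Th *\<^sub>v v t + Pm *\<^sub>v u t" for t
      by (rule eq_vecI) (simp_all add: vdim Pi_mat_def True)
    have c2: "y t = (C * Gm) *\<^sub>v v t" for t
    proof (rule eq_vecI)
      fix i assume "i < dim_vec ((C * Gm) *\<^sub>v v t)"
      then have i: "i < r" using C by simp
      have sc: "state A B x0 u t \<in> carrier_vec 0"
        using state_carrier_gen[OF A B x0 u] n0 by simp
      show "y t $ i = ((C * Gm) *\<^sub>v v t) $ i"
        using i C sc unfolding y_def by (simp add: scalar_prod_def vdim)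
    qed (use C in \<open>simp add: y_def\<close>)
    have Pc: "P_mat L A B C \<in> carrier_mat 0 0" by (simp add: P_mat_def Let_def True)
    have c3: "v t \<in> mat_image (P_mat L A B C)" for t
    proof -
      have "P_mat L A B C *\<^sub>v 0\<^sub>v 0 \<in> mat_image (P_mat L A B C)"
        by (rule img_intro) (use Pc in simp)
      moreover have "P_mat L A B C *\<^sub>v 0\<^sub>v 0 = v t" using Pc vdim by (intro eq_vecI) auto
      ultimately show ?thesis by simp
    qed
    have c4: "mat_rank (P_mat L A B C) = 0"
      using rank_le_rows[OF Pc] Pc unfolding mat_rank_def by simp
    show ?thesis using c1 c2 c3 c4 True n0 by simp
  qed
qed

end
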